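(* In the Mahi-Mahi protocol with wave length $w=5$, in the asynchronous network model, the Validity property of Byzantine Atomic Broadcast holds: if an honest validator $v_k$ calls $\mathrm{bcast}_k(m,q)$, then every honest validator $v_i$ eventually outputs $\mathrm{deliver}_i(m,q,v_k)$, with probability $1$.
   Context: Model: $n=3f+1$ validators, up to $f$ Byzantine (arbitrary behaviour, computationally bounded adversary), the rest honest; asynchronous network where messages between honest validators are eventually delivered with arbitrary delay (the adversary controls the schedule). Validators broadcast via $\mathrm{bcast}_k(m,q)$ and output $\mathrm{deliver}_i(m,q,v_k)$; in Mahi-Mahi the broadcast messages are the blocks honest validators create. Protocol (Mahi-Mahi). Rounds $1,2,\dots$; each honest validator creates and broadcasts exactly one block per round; Byzantine validators may create several or none. A block has an author, a round $r$, transactions, parents (hashes of distinct valid blocks of earlier rounds, including at least $2f+1$ of round $r-1$) and a share of a global perfect coin (any $2f+1$ shares reconstruct a uniformly random, unpredictable value). Each validator keeps a local DAG of valid blocks, adding a block once it holds its causal history (transitive closure of parents, including itself); honest validators reference blocks in their local DAG and fetch missing referenced blocks from the sender. Path from $b$ to $b'$: $b'$ is reached from $b$ along parent references. Vote: a block $b$ of round $r'$ votes for a block $L$ of round $r<r'$ with author $a$ if the first block of author $a$ and round $r$ met in the deterministic depth-first search from $b$ is $L$. With $w=5$: for proposal round $r$, vote round $r+3$, certify round $r+4$; a block $c$ of round $r+4$ is a certificate for $L$ of round $r$ if at least $2f+1$ of its parents are votes for $L$. Leader slots of round $r$: the coin of round $r+4$ selects uniformly at random an ordered list of $\ell$ distinct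 validators ($1\le\ell\le 3f+1$); slots ordered by round then coin order. Classification of each slot (commit of a block / skip / undecided), highest slot first: direct rule — for a block $L$ in the slot, $2f+1$ round-$(r+3)$ blocks that are not votes for $L$ give skip, $2f+1$ round-$(r+4)$ certificates for $L$ give commit of $L$; otherwise indirect rule — the anchor is the first slot of round $>r+4$ not skipped; if it is committed with block $A$, commit $L$ if $A$ has a path to a certificate for some block $L$ of the slot, else skip; if the anchor is undecided, the slot is undecided. Delivery: in slot order, up to the first undecided slot, for each committed leader block deliver deterministically all not-yet-delivered blocks of its causal history. *)

theory Defs
  imports "HOL-Probability.Probability"
begin

text \<open>Validators are the naturals below n = 3f+1. A block carries its author, its round,
  its payload (the broadcast message) and the ordered list of its parents. Blocks are
  identified with their full contents (collision-free hashing); the causal history of a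
  block is finite by construction.\<close>

datatype 'm blk = Blk (auth: nat) (rnd: nat) (payload: 'm) (pars: "'m blk list")

fun dfs :: "'m blk \<Rightarrow> 'm blk list" where
  "dfs (Blk a r m ps) = Blk a r m ps # concat (map dfs ps)"

definition hist :: "'m blk \<Rightarrow> 'm blk set" where
  "hist b = set (dfs b)"

definition authors_at :: "'m blk set \<Rightarrow> nat \<Rightarrow> nat set" where
  "authors_at S r = auth ` {b \<in> S. rnd b = r}"

definition quorum :: "nat \<Rightarrow> 'm blk set \<Rightarrow> nat \<Rightarrow> bool" where
  "quorum f S r \<longleftrightarrow> 2 * f + 1 \<le> card (authors_at S r)"

definition wf_block :: "nat \<Rightarrow> 'm blk \<Rightarrow> bool" where
  "wf_block f b \<longleftrightarrow> auth b < 3 * f + 1 \<and> 1 \<le> rnd b \<and> distinct (pars b)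
     \<and> (\<forall>p \<in> set (pars b). rnd p < rnd b)
     \<and> (1 < rnd b \<longrightarrow> quorum f (set (pars b)) (rnd b - 1))"

definition valid :: "nat \<Rightarrow> 'm blk \<Rightarrow> bool" where
  "valid f b \<longleftrightarrow> (\<forall>x \<in> hist b. wf_block f x)"

definition votes :: "'m blk \<Rightarrow> 'm blk \<Rightarrow> bool" where
  "votes b L \<longleftrightarrow> rnd L < rnd b \<and>
     find (\<lambda>x. auth x = auth L \<and> rnd x = rnd L) (dfs b) = Some L"

definition cert :: "nat \<Rightarrow> 'm blk \<Rightarrow> 'm blk \<Rightarrow> bool" where
  "cert f c L \<longleftrightarrow> rnd c = rnd L + 4 \<and>
     2 * f + 1 \<le> card (auth ` {p \<in> set (pars c). rnd p = rnd L + 3 \<and> votes p L})"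

text \<open>coin r = ordered list of leaders of round r (value of the coin of round r+4).\<close>
definition in_slot :: "(nat \<Rightarrow> nat list) \<Rightarrow> nat \<Rightarrow> nat \<Rightarrow> 'm blk \<Rightarrow> bool" where
  "in_slot coin r j L \<longleftrightarrow> auth L = coin r ! j \<and> rnd L = r"

definition known :: "nat \<Rightarrow> 'm blk set \<Rightarrow> nat \<Rightarrow> bool" where
  "known f D r \<longleftrightarrow> quorum f D (r + 4)"

definition direct_commit :: "nat \<Rightarrow> (nat \<Rightarrow> nat list) \<Rightarrow> 'm blk set \<Rightarrow> nat \<Rightarrow> nat \<Rightarrow> 'm blk \<Rightarrow> bool" where
  "direct_commit f coin D r j L \<longleftrightarrow> L \<in> D \<and> in_slot coin r j L \<and>
     2 * f + 1 \<le> card (auth ` {c \<in> D. cert f c L})"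

definition direct_skip :: "nat \<Rightarrow> (nat \<Rightarrow> nat list) \<Rightarrow> 'm blk set \<Rightarrow> nat \<Rightarrow> nat \<Rightarrow> bool" where
  "direct_skip f coin D r j \<longleftrightarrow>
     2 * f + 1 \<le> card (auth ` {b \<in> D. rnd b = r + 3 \<and> \<not> (\<exists>L. in_slot coin r j L \<and> votes b L)})"

datatype 'm status = Commit "'m blk" | Skip | Undecided

text \<open>Slot (r, j) with j < l is encoded as the index r * l + j (slot order = index order).
  The classification is computed with a fuel argument bounding the depth of the
  indirect-rule recursion (highest slots are classified first).\<close>
primrec stat :: "nat \<Rightarrow> nat \<Rightarrow> (nat \<Rightarrow> nat list) \<Rightarrow> 'm blk set \<Rightarrow> nat \<Rightarrow> nat \<Rightarrow> nat \<Rightarrow> 'm status" where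
  "stat f l coin D 0 r j = Undecided"
| "stat f l coin D (Suc k) r j =
    (if \<not> known f D r then Undecided
     else if (\<exists>L. direct_commit f coin D r j L) then Commit (SOME L. direct_commit f coin D r j L)
     else if direct_skip f coin D r j then Skip
     else (let a = (LEAST s. (r + 5) * l \<le> s \<and> stat f l coin D k (s div l) (s mod l) \<noteq> Skip) in
           case stat f l coin D k (a div l) (a mod l) of
             Commit A \<Rightarrow>
               (if \<exists>c L. c \<in> hist A \<and> in_slot coin r j L \<and> cert f c L
                then Commit (SOME L. in_slot coin r j L \<and> (\<exists>c. c \<in> hist A \<and> cert f c L))
                else Skip)
           | _ \<Rightarrow> Undecided))"

definition status :: "nat \<Rightarrow> nat \<Rightarrow> (nat \<Rightarrow> nat list) \<Rightarrow> 'm blk set \<Rightarrow> nat \<Rightarrow> nat \<Rightarrow> 'm status" where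
  "status f l coin D r j = stat f l coin D (Suc (Max (insert 0 (rnd ` D)))) r j"

definition delivered :: "nat \<Rightarrow> nat \<Rightarrow> (nat \<Rightarrow> nat list) \<Rightarrow> 'm blk set \<Rightarrow> 'm blk set" where
  "delivered f l coin D =
    (let u = (LEAST s. l \<le> s \<and> status f l coin D (s div l) (s mod l) = Undecided) in
     \<Union> {hist L | L s. l \<le> s \<and> s < u \<and> status f l coin D (s div l) (s mod l) = Commit L})"

text \<open>An execution (discrete global time): dag i t is the local DAG of validator i at time t;
  hblk i r is the block honest validator i creates in round r and htime i r the time at
  which it does so (None if never).\<close>
record 'm exec =
  dag :: "nat \<Rightarrow> nat \<Rightarrow> 'm blk set"
  hblk :: "nat \<Rightarrow> nat \<Rightarrow> 'm blk"
  htime :: "nat \<Rightarrow> nat \<Rightarrow> nat option"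

definition honest :: "nat \<Rightarrow> nat set \<Rightarrow> nat \<Rightarrow> bool" where
  "honest f Byz i \<longleftrightarrow> i < 3 * f + 1 \<and> i \<notin> Byz"

definition honest_parents :: "'m exec \<Rightarrow> nat \<Rightarrow> nat \<Rightarrow> 'm blk set \<Rightarrow> 'm blk set" where
  "honest_parents E i r D = {b \<in> D. rnd b < r \<and>
      (1 < r \<longrightarrow> b = hblk E i (r - 1) \<or> b \<notin> hist (hblk E i (r - 1)))}"

definition admissible :: "nat \<Rightarrow> nat set \<Rightarrow> 'm exec \<Rightarrow> bool" where
  "admissible f Byz E \<longleftrightarrow> (\<forall>i. honest f Byz i \<longrightarrow>
     dag E i 0 = {}
   \<and> (\<forall>t. finite (dag E i t) \<and> dag E i t \<subseteq> dag E i (Suc t))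
   \<and> (\<forall>t b. b \<in> dag E i t \<longrightarrow> valid f b \<and> set (pars b) \<subseteq> dag E i t)
   \<and> (\<forall>t b. b \<in> dag E i t \<longrightarrow> honest f Byz (auth b) \<longrightarrow>
        (\<exists>r \<tau>. htime E (auth b) r = Some \<tau> \<and> \<tau> \<le> t \<and> b = hblk E (auth b) r))
   \<and> (\<forall>r \<tau>. htime E i r = Some \<tau> \<longrightarrow>
        (\<exists>t. \<tau> = Suc t \<and> 1 \<le> r
           \<and> (1 < r \<longrightarrow> (\<exists>\<tau>'. htime E i (r - 1) = Some \<tau>' \<and> \<tau>' \<le> t) \<and> quorum f (dag E i t) (r - 1))
           \<and> auth (hblk E i r) = i \<and> rnd (hblk E i r) = r \<and> distinct (pars (hblk E i r))
           \<and> set (pars (hblk E i r)) = honest_parents E i r (dag E i t)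
           \<and> hblk E i r \<in> dag E i \<tau>))
   \<and> htime E i 1 \<noteq> None
   \<and> (\<forall>r t. 1 \<le> r \<and> htime E i r \<noteq> None \<and> quorum f (dag E i t) r \<longrightarrow> htime E i (Suc r) \<noteq> None)
   \<and> (\<forall>j r. honest f Byz j \<longrightarrow> htime E j r \<noteq> None \<longrightarrow> (\<exists>t. hblk E j r \<in> dag E i t)))"

definition agree_upto :: "nat \<Rightarrow> nat set \<Rightarrow> 'm exec \<Rightarrow> 'm exec \<Rightarrow> nat \<Rightarrow> bool" where
  "agree_upto f Byz E E' t \<longleftrightarrow>
     (\<forall>i \<tau>. honest f Byz i \<longrightarrow> \<tau> \<le> t \<longrightarrow> dag E i \<tau> = dag E' i \<tau>)
   \<and> (\<forall>i r \<tau>. honest f Byz i \<longrightarrow> \<tau> \<le> t \<longrightarrow> (htime E i r = Some \<tau>) = (htime E' i r = Some \<tau>))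
   \<and> (\<forall>i r \<tau>. honest f Byz i \<longrightarrow> \<tau> \<le> t \<longrightarrow> htime E i r = Some \<tau> \<longrightarrow> hblk E i r = hblk E' i r)"

text \<open>The leaders of round r (coin of round r+4) become known to the adversary once at least
  f+1 honest validators have published their round-(r+4) blocks (with the f Byzantine shares
  this gives 2f+1 shares).\<close>
definition revealed :: "nat \<Rightarrow> nat set \<Rightarrow> 'm exec \<Rightarrow> nat \<Rightarrow> nat \<Rightarrow> bool" where
  "revealed f Byz E t r \<longleftrightarrow>
     f + 1 \<le> card {i. honest f Byz i \<and> (\<exists>\<tau>\<le>t. htime E i (r + 4) = Some \<tau>)}"

text \<open>A (deterministic, adaptive) adversary is a map from coin outcomes to executions that
  does not anticipate unrevealed coins: the steps up to time t+1 depend only on the coin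
  values revealed at time t.\<close>
definition non_anticipating :: "nat \<Rightarrow> nat set \<Rightarrow> ((nat \<Rightarrow> nat list) \<Rightarrow> 'm exec) \<Rightarrow> bool" where
  "non_anticipating f Byz Adv \<longleftrightarrow> (\<forall>\<omega> \<omega>' t.
     (\<forall>r. revealed f Byz (Adv \<omega>) t r \<longrightarrow> \<omega> r = \<omega>' r) \<longrightarrow> agree_upto f Byz (Adv \<omega>) (Adv \<omega>') (Suc t))"

definition leader_lists :: "nat \<Rightarrow> nat \<Rightarrow> nat list set" where
  "leader_lists f l = {xs. length xs = l \<and> distinct xs \<and> set xs \<subseteq> {..<3 * f + 1}}"

definition coin_space :: "nat \<Rightarrow> nat \<Rightarrow> (nat \<Rightarrow> nat list) measure" where
  "coin_space f l = PiM UNIV (\<lambda>_::nat. measure_pmf (pmf_of_set (leader_lists f l)))"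

end

theory Submission
  imports Defs
begin


lemma hist_eq: "hist b = insert b (\<Union>p\<in>set (pars b). hist p)"
  by (cases b) (auto simp: hist_def)

lemma hist_self[simp]: "b \<in> hist b"
  by (subst hist_eq) simp

lemma hist_par: "p \<in> set (pars b) \<Longrightarrow> hist p \<subseteq> hist b"
  by (subst (2) hist_eq) auto

lemma hist_trans: "x \<in> hist b \<Longrightarrow> hist x \<subseteq> hist b"
proof (induction b arbitrary: x)
  case (Blk a r m ps)
  from Blk.prems have "x = Blk a r m ps \<or> (\<exists>p\<in>set ps. x \<in> hist p)"
    by (subst (asm) hist_eq) auto
  then show ?case
  proof
    assume "x = Blk a r m ps" then show ?thesis by simp
  next
    assume "\<exists>p\<in>set ps. x \<in> hist p"
    then obtain p where p: "p \<in> set ps" "x \<in> hist p" by blast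
    have "hist x \<subseteq> hist p" using Blk.IH[OF p(1) p(2)] .
    also have "hist p \<subseteq> hist (Blk a r m ps)" using hist_par[of p "Blk a r m ps"] p(1) by simp
    finally show ?thesis .
  qed
qed

lemma hist_closed:
  assumes "\<forall>b\<in>D. set (pars b) \<subseteq> D" "b \<in> D"
  shows "hist b \<subseteq> D"
  using assms(2)
proof (induction b)
  case (Blk a r m ps)
  have "\<forall>p\<in>set ps. hist p \<subseteq> D"
  proof
    fix p assume p: "p \<in> set ps"
    then have "p \<in> D" using assms(1) Blk.prems by fastforce
    then show "hist p \<subseteq> D" using Blk.IH p by blast
  qed
  then show ?case using Blk.prems by (subst hist_eq) auto
qed

lemma find_SomeI:
  assumes "x \<in> set xs" "P x" "\<And>y. y \<in> set xs \<Longrightarrow> P y \<Longrightarrow> y = x"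
  shows "find P xs = Some x"
proof -
  have "find P xs \<noteq> None" using assms by (auto simp: find_None_iff)
  then obtain y where y: "find P xs = Some y" by auto
  then have "y \<in> set xs" "P y" by (auto simp: find_Some_iff)
  with assms(3) y show ?thesis by auto
qed

definition hon :: "nat \<Rightarrow> nat set \<Rightarrow> nat set" where
  "hon f Byz = {i. honest f Byz i}"

locale mm =
  fixes f :: nat and Byz :: "nat set" and E :: "'m exec"
  assumes adm: "admissible f Byz E"
    and byz_sub: "Byz \<subseteq> {..<3*f+1}" and byz_card: "card Byz \<le> f"
begin

abbreviation "H \<equiv> hon f Byz"

lemma H_eq: "H = {..<3*f+1} - Byz"
  by (auto simp: hon_def honest_def)

lemma H_finite[simp]: "finite H" by (simp add: H_eq)

lemma card_H: "card H = 3*f+1 - card Byz"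
  using byz_sub by (simp add: H_eq card_Diff_subset finite_subset)

lemma card_H_ge: "2*f+1 \<le> card H"
  using card_H byz_card by simp

lemma honest_H: "honest f Byz i \<longleftrightarrow> i \<in> H" by (simp add: hon_def)

lemma dag0: "honest f Byz i \<Longrightarrow> dag E i 0 = {}"
  using adm by (simp add: admissible_def)
lemma dag_finite: "honest f Byz i \<Longrightarrow> finite (dag E i t)"
  using adm by (simp add: admissible_def)
lemma dag_Suc: "honest f Byz i \<Longrightarrow> dag E i t \<subseteq> dag E i (Suc t)"
  using adm by (simp add: admissible_def)
lemma dag_mono: "honest f Byz i \<Longrightarrow> t \<le> t' \<Longrightarrow> dag E i t \<subseteq> dag E i t'"
  using dag_Suc[of i] by (metis lift_Suc_mono_le)
lemma dag_valid: "honest f Byz i \<Longrightarrow> b \<in> dag E i t \<Longrightarrow> valid f b"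
  using adm by (simp add: admissible_def)
lemma dag_pars: "honest f Byz i \<Longrightarrow> b \<in> dag E i t \<Longrightarrow> set (pars b) \<subseteq> dag E i t"
  using adm by (simp add: admissible_def)
lemma dag_hist: "honest f Byz i \<Longrightarrow> b \<in> dag E i t \<Longrightarrow> hist b \<subseteq> dag E i t"
  using hist_closed[of "dag E i t" b] dag_pars by blast
lemma dag_hon: "honest f Byz i \<Longrightarrow> b \<in> dag E i t \<Longrightarrow> honest f Byz (auth b) \<Longrightarrow>
        (\<exists>r \<tau>. htime E (auth b) r = Some \<tau> \<and> \<tau> \<le> t \<and> b = hblk E (auth b) r)"
  using adm by (simp add: admissible_def)
lemma htime_prop: "honest f Byz i \<Longrightarrow> htime E i r = Some \<tau> \<Longrightarrow>
        (\<exists>t. \<tau> = Suc t \<and> 1 \<le> r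
           \<and> (1 < r \<longrightarrow> (\<exists>\<tau>'. htime E i (r - 1) = Some \<tau>' \<and> \<tau>' \<le> t) \<and> quorum f (dag E i t) (r - 1))
           \<and> auth (hblk E i r) = i \<and> rnd (hblk E i r) = r \<and> distinct (pars (hblk E i r))
           \<and> set (pars (hblk E i r)) = honest_parents E i r (dag E i t)
           \<and> hblk E i r \<in> dag E i \<tau>)"
  using adm by (simp add: admissible_def)
lemma htime1: "honest f Byz i \<Longrightarrow> htime E i 1 \<noteq> None"
  using adm by (simp add: admissible_def)
lemma htime_prog: "honest f Byz i \<Longrightarrow> 1 \<le> r \<Longrightarrow> htime E i r \<noteq> None \<Longrightarrow> quorum f (dag E i t) r \<Longrightarrow> htime E i (Suc r) \<noteq> None"
  using adm unfolding admissible_def by blast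
lemma eventually_in: "honest f Byz i \<Longrightarrow> honest f Byz j \<Longrightarrow> htime E j r \<noteq> None \<Longrightarrow> \<exists>t. hblk E j r \<in> dag E i t"
  using adm unfolding admissible_def by blast

lemma hblk_auth: "honest f Byz i \<Longrightarrow> htime E i r = Some \<tau> \<Longrightarrow> auth (hblk E i r) = i"
  using htime_prop by blast
lemma hblk_rnd: "honest f Byz i \<Longrightarrow> htime E i r = Some \<tau> \<Longrightarrow> rnd (hblk E i r) = r"
  using htime_prop by blast
lemma hblk_in: "honest f Byz i \<Longrightarrow> htime E i r = Some \<tau> \<Longrightarrow> hblk E i r \<in> dag E i \<tau>"
  using htime_prop by blast
lemma htime_Suc: "honest f Byz i \<Longrightarrow> htime E i r = Some \<tau> \<Longrightarrow> \<exists>t. \<tau> = Suc t"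
  using htime_prop by blast
lemma htime_ge1: "honest f Byz i \<Longrightarrow> htime E i r = Some \<tau> \<Longrightarrow> 1 \<le> r"
  using htime_prop by blast

lemma htime_pred: "honest f Byz i \<Longrightarrow> htime E i (Suc r) = Some \<tau> \<Longrightarrow> 1 \<le> r \<Longrightarrow>
    \<exists>\<tau>'. htime E i r = Some \<tau>' \<and> \<tau>' < \<tau>"
  using htime_prop[of i "Suc r" \<tau>] by fastforce

lemma htime_down: "honest f Byz i \<Longrightarrow> htime E i r = Some \<tau> \<Longrightarrow> 1 \<le> r' \<Longrightarrow> r' \<le> r \<Longrightarrow>
    \<exists>\<tau>'. htime E i r' = Some \<tau>' \<and> \<tau>' \<le> \<tau>"
proof (induction r arbitrary: \<tau>)
  case 0 then show ?case by simp
next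
  case (Suc r)
  show ?case
  proof (cases "r' = Suc r")
    case True then show ?thesis using Suc.prems by auto
  next
    case False
    with Suc.prems have "r' \<le> r" "1 \<le> r" by auto
    from htime_pred[OF Suc.prems(1,2) this(2)] obtain \<tau>' where "htime E i r = Some \<tau>'" "\<tau>' < \<tau>" by blast
    with Suc.IH[OF Suc.prems(1) this(1) Suc.prems(3) \<open>r' \<le> r\<close>] show ?thesis by force
  qed
qed

lemma uniq: "honest f Byz i \<Longrightarrow> b \<in> dag E i t \<Longrightarrow> honest f Byz (auth b) \<Longrightarrow>
   \<exists>\<tau>. htime E (auth b) (rnd b) = Some \<tau> \<and> \<tau> \<le> t \<and> b = hblk E (auth b) (rnd b)"
proof -
  assume a: "honest f Byz i" "b \<in> dag E i t" "honest f Byz (auth b)"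
  from dag_hon[OF a] obtain r \<tau> where r: "htime E (auth b) r = Some \<tau>" "\<tau> \<le> t" "b = hblk E (auth b) r" by blast
  have "rnd b = r" using hblk_rnd[OF a(3) r(1)] r(3) by simp
  with r show ?thesis by auto
qed

lemma uniq2: "honest f Byz i \<Longrightarrow> b \<in> dag E i t \<Longrightarrow> honest f Byz a \<Longrightarrow> auth b = a \<Longrightarrow> rnd b = r \<Longrightarrow>
   b = hblk E a r \<and> (\<exists>\<tau>. htime E a r = Some \<tau> \<and> \<tau> \<le> t)"
  using uniq by blast

end


lemma finite_eventually:
  fixes P :: "'a \<Rightarrow> nat \<Rightarrow> bool"
  assumes "finite A" "\<forall>x\<in>A. \<exists>t. P x t" "\<And>x t t'. P x t \<Longrightarrow> t \<le> t' \<Longrightarrow> P x t'"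
  shows "\<exists>t. \<forall>x\<in>A. P x t"
  using assms(1,2)
proof (induction A rule: finite_induct)
  case empty then show ?case by simp
next
  case (insert a A)
  have "\<forall>x\<in>A. \<exists>t. P x t" using insert.prems by simp
  then obtain t1 where t1: "\<forall>x\<in>A. P x t1" using insert.IH by iprover
  have "\<exists>t. P a t" using insert.prems by simp
  then obtain t2 where t2: "P a t2" by iprover
  have "\<forall>x\<in>insert a A. P x (max t1 t2)"
  proof
    fix x assume "x \<in> insert a A"
    then show "P x (max t1 t2)"
    proof
      assume "x = a" then show ?thesis using assms(3)[OF t2, of "max t1 t2"] by simp
    next
      assume "x \<in> A" then show ?thesis using assms(3)[of x t1 "max t1 t2"] t1 \<open>x \<in> A\<close> by simp
    qed
  qed
  then show ?case by iprover
qed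

context mm begin

lemma quorum_of_H:
  assumes "finite D" "\<forall>j\<in>H. \<exists>b\<in>D. auth b = j \<and> rnd b = r"
  shows "quorum f D r"
proof -
  have "H \<subseteq> authors_at D r"
  proof
    fix j assume "j \<in> H"
    then obtain b where "b \<in> D" "auth b = j" "rnd b = r" using assms(2) by blast
    then show "j \<in> authors_at D r" unfolding authors_at_def by blast
  qed
  moreover have "finite (authors_at D r)" using assms(1) by (simp add: authors_at_def)
  ultimately have "card H \<le> card (authors_at D r)" by (rule card_mono[rotated])
  then show ?thesis using card_H_ge by (simp add: quorum_def)
qed

lemma all_rounds0: "1 \<le> r \<Longrightarrow> \<forall>i. honest f Byz i \<longrightarrow> htime E i r \<noteq> None"
proof (induction r rule: nat_induct_at_least)
  case base then show ?case using htime1 by simp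
next
  case (Suc r)
  show ?case
  proof (intro allI impI)
    fix i assume hi: "honest f Byz i"
    have "\<forall>j\<in>H. \<exists>t. hblk E j r \<in> dag E i t"
      using eventually_in hi Suc.IH by (simp add: honest_H)
    moreover have "\<And>j t t'. hblk E j r \<in> dag E i t \<Longrightarrow> t \<le> t' \<Longrightarrow> hblk E j r \<in> dag E i t'"
      using dag_mono[OF hi] by blast
    ultimately obtain t where t: "\<forall>j\<in>H. hblk E j r \<in> dag E i t"
      using finite_eventually[of H "\<lambda>j t. hblk E j r \<in> dag E i t"] H_finite by blast
    have "quorum f (dag E i t) r"
    proof (rule quorum_of_H)
      show "finite (dag E i t)" using dag_finite hi by simp
      show "\<forall>j\<in>H. \<exists>b\<in>dag E i t. auth b = j \<and> rnd b = r"
      proof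
        fix j assume j: "j \<in> H"
        then have hj: "honest f Byz j" by (simp add: honest_H)
        then obtain \<tau> where "htime E j r = Some \<tau>" using Suc.IH by blast
        then have "auth (hblk E j r) = j" "rnd (hblk E j r) = r" using hblk_auth hblk_rnd hj by blast+
        then show "\<exists>b\<in>dag E i t. auth b = j \<and> rnd b = r"
          using t j by blast
      qed
    qed
    then show "htime E i (Suc r) \<noteq> None" using htime_prog hi Suc by blast
  qed
qed

lemma all_rounds: "honest f Byz i \<Longrightarrow> 1 \<le> r \<Longrightarrow> htime E i r \<noteq> None"
  using all_rounds0 by blast

lemma htime_some: "honest f Byz i \<Longrightarrow> 1 \<le> r \<Longrightarrow> \<exists>\<tau>. htime E i r = Some \<tau>"
  using all_rounds by blast

lemma htime_ge: "1 \<le> r \<Longrightarrow> honest f Byz i \<Longrightarrow> \<exists>\<tau>. htime E i r = Some \<tau> \<and> r \<le> \<tau>"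
proof (induction r rule: nat_induct_at_least)
  case base
  obtain \<tau> where t: "htime E i 1 = Some \<tau>" using htime_some base by blast
  obtain t' where "\<tau> = Suc t'" using htime_Suc[OF base t] by blast
  then show ?case using t by simp
next
  case (Suc r)
  obtain \<tau> where t: "htime E i (Suc r) = Some \<tau>" using htime_some[OF Suc.prems, of "Suc r"] by auto
  from htime_pred[OF Suc.prems t Suc.hyps] obtain \<tau>' where "htime E i r = Some \<tau>'" "\<tau>' < \<tau>" by blast
  with Suc.IH[OF Suc.prems] t show ?case by auto
qed

lemma prev_par: "honest f Byz a \<Longrightarrow> htime E a \<rho> = Some \<tau> \<Longrightarrow> 1 < \<rho> \<Longrightarrow>
    hblk E a (\<rho> - 1) \<in> set (pars (hblk E a \<rho>))"
proof -
  assume a: "honest f Byz a" "htime E a \<rho> = Some \<tau>" "1 < \<rho>"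
  from htime_prop[OF a(1,2)] obtain t \<tau>' where t: "\<tau> = Suc t" "htime E a (\<rho> - 1) = Some \<tau>'" "\<tau>' \<le> t"
     "set (pars (hblk E a \<rho>)) = honest_parents E a \<rho> (dag E a t)" using a(3) by blast
  have "hblk E a (\<rho> - 1) \<in> dag E a t" using hblk_in[OF a(1) t(2)] dag_mono[OF a(1) t(3)] by blast
  moreover have "rnd (hblk E a (\<rho> - 1)) < \<rho>" using hblk_rnd[OF a(1) t(2)] a(3) by simp
  ultimately show ?thesis using t(4) by (simp add: honest_parents_def)
qed

lemma dag_in_hist: "honest f Byz a \<Longrightarrow> htime E a \<rho> = Some (Suc t) \<Longrightarrow> x \<in> dag E a t \<Longrightarrow> rnd x < \<rho> \<Longrightarrow>
    x \<in> hist (hblk E a \<rho>)"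
proof -
  assume a: "honest f Byz a" "htime E a \<rho> = Some (Suc t)" "x \<in> dag E a t" "rnd x < \<rho>"
  from htime_prop[OF a(1,2)] have ps: "set (pars (hblk E a \<rho>)) = honest_parents E a \<rho> (dag E a t)" by auto
  show ?thesis
  proof (cases "1 < \<rho> \<and> x \<noteq> hblk E a (\<rho> - 1) \<and> x \<in> hist (hblk E a (\<rho> - 1))")
    case True
    then have "hist (hblk E a (\<rho> - 1)) \<subseteq> hist (hblk E a \<rho>)"
      using prev_par[OF a(1,2)] hist_par by blast
    then show ?thesis using True by blast
  next
    case False
    then have "x \<in> set (pars (hblk E a \<rho>))" using ps a(3,4) by (auto simp: honest_parents_def)
    then show ?thesis using hist_par[of x] hist_self by blast
  qed
qed

lemma hist_chain: "\<rho> \<le> \<rho>' \<Longrightarrow> honest f Byz a \<Longrightarrow> 1 \<le> \<rho> \<Longrightarrow> x \<in> hist (hblk E a \<rho>) \<Longrightarrow> x \<in> hist (hblk E a \<rho>')"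
proof (induction \<rho>' rule: dec_induct)
  case base then show ?case by simp
next
  case (step n)
  obtain \<tau> where t: "htime E a (Suc n) = Some \<tau>" using htime_some[OF step.prems(1), of "Suc n"] by auto
  have "hblk E a n \<in> set (pars (hblk E a (Suc n)))" using prev_par[OF step.prems(1) t] step by simp
  then show ?case using step hist_par by blast
qed

lemma late_hist:
  assumes "honest f Byz k" "htime E k r \<noteq> None"
  shows "\<exists>R. \<forall>a\<in>H. \<forall>\<rho>\<ge>R. hblk E k r \<in> hist (hblk E a \<rho>)"
proof -
  let ?b = "hblk E k r"
  have "\<forall>a\<in>H. \<exists>R. \<forall>\<rho>\<ge>R. ?b \<in> hist (hblk E a \<rho>)"
  proof
    fix a assume aH: "a \<in> H"
    then have a: "honest f Byz a" by (simp add: honest_H)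
    obtain t where t: "?b \<in> dag E a t" using eventually_in[OF a assms(1,2)] by blast
    define \<rho> where "\<rho> = t + rnd ?b + 2"
    obtain \<tau> where \<tau>: "htime E a \<rho> = Some \<tau>" "\<rho> \<le> \<tau>" using htime_ge[OF _ a, of \<rho>] by (auto simp: \<rho>_def)
    obtain t' where t': "\<tau> = Suc t'" using htime_Suc[OF a \<tau>(1)] by blast
    have "?b \<in> dag E a t'" using t dag_mono[OF a, of t t'] \<tau> t' by (auto simp: \<rho>_def)
    then have "?b \<in> hist (hblk E a \<rho>)" using dag_in_hist[OF a] \<tau> t' by (auto simp: \<rho>_def)
    then have "\<forall>\<rho>'\<ge>\<rho>. ?b \<in> hist (hblk E a \<rho>')"
    proof (intro allI impI)
      fix \<rho>' assume "\<rho> \<le> \<rho>'" "?b \<in> hist (hblk E a \<rho>)"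
      then show "?b \<in> hist (hblk E a \<rho>')" using hist_chain[OF \<open>\<rho> \<le> \<rho>'\<close> a] by (simp add: \<rho>_def)
    qed
    then show "\<exists>R. \<forall>\<rho>\<ge>R. ?b \<in> hist (hblk E a \<rho>)" by blast
  qed
  moreover have "\<And>a R R'. \<forall>\<rho>\<ge>R. ?b \<in> hist (hblk E a \<rho>) \<Longrightarrow> R \<le> R' \<Longrightarrow> \<forall>\<rho>\<ge>R'. ?b \<in> hist (hblk E a \<rho>)"
    by simp
  ultimately show ?thesis
    using finite_eventually[of H "\<lambda>a R. \<forall>\<rho>\<ge>R. ?b \<in> hist (hblk E a \<rho>)"] H_finite by blast
qed

end


context mm begin

definition goodL :: "nat \<Rightarrow> nat \<Rightarrow> bool" where
  "goodL r a \<longleftrightarrow> honest f Byz a \<and> 1 \<le> r \<and>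
     f + 1 \<le> card {x. honest f Byz x \<and> htime E x (r+2) \<noteq> None \<and> hblk E a r \<in> hist (hblk E x (r+2))}"

lemma valid_hist_wf: "valid f c \<Longrightarrow> x \<in> hist c \<Longrightarrow> wf_block f x"
  by (simp add: valid_def)

lemma authors_at_sub:
  assumes "valid f c"
  shows "authors_at (set (pars c)) \<rho> \<subseteq> {..<3*f+1}"
proof
  fix u assume "u \<in> authors_at (set (pars c)) \<rho>"
  then obtain p where p: "p \<in> set (pars c)" "auth p = u" by (auto simp: authors_at_def)
  then have "p \<in> hist c" using hist_par hist_self by blast
  then have "wf_block f p" using assms valid_hist_wf by blast
  then show "u \<in> {..<3*f+1}" using p by (simp add: wf_block_def)
qed

lemma quorum_pars:
  assumes "valid f c" "1 < rnd c"
  shows "2*f+1 \<le> card (authors_at (set (pars c)) (rnd c - 1))"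
proof -
  have "wf_block f c" using assms(1) valid_hist_wf hist_self by blast
  then show ?thesis using assms(2) by (simp add: wf_block_def quorum_def)
qed

lemma good_in_hist:
  assumes g: "goodL r a" and i: "honest f Byz i" and c: "c \<in> dag E i t" "rnd c = r + 3"
  shows "hblk E a r \<in> hist c"
proof -
  let ?X = "{x. honest f Byz x \<and> htime E x (r+2) \<noteq> None \<and> hblk E a r \<in> hist (hblk E x (r+2))}"
  let ?A = "authors_at (set (pars c)) (r+2)"
  have v: "valid f c" using dag_valid[OF i c(1)] .
  have qA: "2*f+1 \<le> card ?A" using quorum_pars[OF v] c(2) by simp
  have AS: "?A \<subseteq> {..<3*f+1}" using authors_at_sub[OF v] .
  have XS: "?X \<subseteq> {..<3*f+1}" by (auto simp: honest_def)
  have cX: "f+1 \<le> card ?X" using g by (simp add: goodL_def)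
  have "?A \<inter> ?X \<noteq> {}"
  proof
    assume "?A \<inter> ?X = {}"
    then have "?A \<subseteq> {..<3*f+1} - ?X" using AS by blast
    then have "card ?A \<le> card ({..<3*f+1} - ?X)" by (intro card_mono) auto
    also have "\<dots> = 3*f+1 - card ?X" using XS by (simp add: card_Diff_subset finite_subset)
    finally show False using qA cX by simp
  qed
  then obtain x where x: "x \<in> ?A" "x \<in> ?X" by blast
  then obtain p where p: "p \<in> set (pars c)" "rnd p = r+2" "auth p = x" by (auto simp: authors_at_def)
  have hx: "honest f Byz x" using x(2) by simp
  have "p \<in> dag E i t" using dag_pars[OF i c(1)] p(1) by blast
  then have "p = hblk E x (r+2)" using uniq2[OF i _ hx p(3) p(2)] by blast
  then have "hblk E a r \<in> hist p" using x(2) by simp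
  then show ?thesis using hist_par[OF p(1)] by blast
qed

lemma votes_hblk:
  assumes a: "honest f Byz a" "htime E a r = Some \<tau>0" and i: "honest f Byz i"
    and c: "c \<in> dag E i t" "r < rnd c" "hblk E a r \<in> hist c"
  shows "votes c (hblk E a r)"
proof -
  let ?L = "hblk E a r"
  have aL: "auth ?L = a" "rnd ?L = r" using hblk_auth[OF a] hblk_rnd[OF a] by auto
  have "find (\<lambda>x. auth x = auth ?L \<and> rnd x = rnd ?L) (dfs c) = Some ?L"
  proof (rule find_SomeI)
    show "?L \<in> set (dfs c)" using c(3) by (simp add: hist_def)
    show "auth ?L = auth ?L \<and> rnd ?L = rnd ?L" by simp
    fix y assume y: "y \<in> set (dfs c)" "auth y = auth ?L \<and> rnd y = rnd ?L"
    have "y \<in> dag E i t" using y(1) dag_hist[OF i c(1)] by (auto simp: hist_def)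
    then show "y = ?L" using uniq2[OF i _ a(1)] y(2) aL by auto
  qed
  then show ?thesis using c(2) aL by (simp add: votes_def)
qed

lemma good_cert:
  assumes g: "goodL r a" and j: "honest f Byz j" and tj: "htime E j (r+4) = Some \<tau>"
  shows "cert f (hblk E j (r+4)) (hblk E a r)"
proof -
  let ?B = "hblk E j (r+4)" and ?L = "hblk E a r"
  have ha: "honest f Byz a" "1 \<le> r" using g by (auto simp: goodL_def)
  obtain \<tau>0 where t0: "htime E a r = Some \<tau>0" using htime_some[OF ha] by blast
  have rL: "rnd ?L = r" using hblk_rnd[OF ha(1) t0] .
  have Bin: "?B \<in> dag E j \<tau>" using hblk_in[OF j tj] .
  have rB: "rnd ?B = r + 4" using hblk_rnd[OF j tj] .
  have v: "valid f ?B" using dag_valid[OF j Bin] .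
  have eq: "{p \<in> set (pars ?B). rnd p = rnd ?L + 3 \<and> votes p ?L} = {p \<in> set (pars ?B). rnd p = r + 3}"
  proof (intro set_eqI iffI)
    fix p assume "p \<in> {p \<in> set (pars ?B). rnd p = r + 3}"
    then have p: "p \<in> set (pars ?B)" "rnd p = r + 3" by auto
    have pin: "p \<in> dag E j \<tau>" using dag_pars[OF j Bin] p(1) by blast
    have "?L \<in> hist p" using good_in_hist[OF g j pin p(2)] .
    then have "votes p ?L" using votes_hblk[OF ha(1) t0 j pin] p(2) by simp
    then show "p \<in> {p \<in> set (pars ?B). rnd p = rnd ?L + 3 \<and> votes p ?L}" using p rL by simp
  qed (use rL in auto)
  have "auth ` {p \<in> set (pars ?B). rnd p = r + 3} = authors_at (set (pars ?B)) (r+3)"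
    by (simp add: authors_at_def)
  moreover have "2*f+1 \<le> card (authors_at (set (pars ?B)) (r+3))"
    using quorum_pars[OF v] rB by (simp add: add.commute)
  ultimately show ?thesis using eq rB rL by (simp add: cert_def)
qed

lemma good_direct_commit:
  assumes g: "goodL r a" and co: "coin r ! 0 = a" and i: "honest f Byz i"
    and Lin: "hblk E a r \<in> dag E i t" and Bs: "\<forall>j\<in>H. hblk E j (r+4) \<in> dag E i t"
  shows "direct_commit f coin (dag E i t) r 0 (hblk E a r)"
proof -
  let ?L = "hblk E a r" and ?D = "dag E i t"
  have ha: "honest f Byz a" "1 \<le> r" using g by (auto simp: goodL_def)
  obtain \<tau>0 where t0: "htime E a r = Some \<tau>0" using htime_some[OF ha] by blast
  have aL: "auth ?L = a" "rnd ?L = r" using hblk_auth[OF ha(1) t0] hblk_rnd[OF ha(1) t0] by auto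
  have "H \<subseteq> auth ` {c \<in> ?D. cert f c ?L}"
  proof
    fix j assume jH: "j \<in> H"
    then have j: "honest f Byz j" by (simp add: honest_H)
    obtain \<tau> where tj: "htime E j (r+4) = Some \<tau>" using htime_some[OF j, of "r+4"] by auto
    have "cert f (hblk E j (r+4)) ?L" using good_cert[OF g j tj] .
    moreover have "auth (hblk E j (r+4)) = j" using hblk_auth[OF j tj] .
    ultimately show "j \<in> auth ` {c \<in> ?D. cert f c ?L}" using Bs jH by force
  qed
  moreover have "finite (auth ` {c \<in> ?D. cert f c ?L})" using dag_finite[OF i] by simp
  ultimately have "card H \<le> card (auth ` {c \<in> ?D. cert f c ?L})" by (rule card_mono[rotated])
  then show ?thesis using card_H_ge Lin aL co by (simp add: direct_commit_def in_slot_def)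
qed

end


lemma status_cases3: "s \<noteq> Undecided \<Longrightarrow> s \<noteq> Skip \<Longrightarrow> \<exists>A. s = Commit A"
  by (cases s) auto

lemma stat_direct:
  assumes "known f D r" "direct_commit f coin D r j L"
  shows "\<exists>A. stat f l coin D (Suc k) r j = Commit A"
  using assms by auto

lemma stat_decided:
  assumes l: "1 \<le> l"
    and kn: "\<forall>\<rho>\<le>R+5. known f D \<rho>"
    and dc: "\<forall>i\<in>{1..5}. \<exists>L. direct_commit f coin D (R+i) 0 L"
  shows "r \<le> R \<Longrightarrow> j < l \<Longrightarrow> R + 2 - r \<le> k \<Longrightarrow> stat f l coin D k r j \<noteq> Undecided"
proof (induction "R - r" arbitrary: r j k rule: less_induct)
  case less
  obtain k' where k': "k = Suc k'" using less.prems by (cases k) auto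
  have kr: "known f D r" using kn less.prems by simp
  show ?case
  proof (cases "(\<exists>L. direct_commit f coin D r j L) \<or> direct_skip f coin D r j")
    case True
    then show ?thesis using kr k' by auto
  next
    case False
    define Q where "Q = (\<lambda>s. (r + 5) * l \<le> s \<and> stat f l coin D k' (s div l) (s mod l) \<noteq> Skip)"
    define a where "a = (LEAST s. Q s)"
    define \<rho>0 where "\<rho>0 = max (R+1) (r+5)"
    have \<rho>0: "R+1 \<le> \<rho>0" "\<rho>0 \<le> R+5" "r+5 \<le> \<rho>0" using less.prems by (auto simp: \<rho>0_def)
    obtain k'' where k'': "k' = Suc k''" using less.prems k' by (cases k') auto
    have s0div: "(\<rho>0 * l) div l = \<rho>0" "(\<rho>0 * l) mod l = 0" using l by auto
    have dc0: "\<exists>L. direct_commit f coin D \<rho>0 0 L"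
    proof -
      have "\<rho>0 = R + (\<rho>0 - R)" "\<rho>0 - R \<in> {1..5}" using \<rho>0 by auto
      then show ?thesis using dc by metis
    qed
    have kn0: "known f D \<rho>0" using kn \<rho>0 by simp
    have c0: "\<exists>A. stat f l coin D k' \<rho>0 0 = Commit A" using dc0 kn0 k'' by auto
    have Q0: "Q (\<rho>0 * l)" using c0 \<rho>0 s0div by (auto simp: Q_def)
    have Qa: "Q a" unfolding a_def using Q0 by (rule LeastI)
    have ale: "a \<le> \<rho>0 * l" unfolding a_def using Q0 by (rule Least_le)
    have "\<exists>A. stat f l coin D k' (a div l) (a mod l) = Commit A"
    proof (cases "a div l \<le> R")
      case True
      have "(r+5)*l \<le> a" using Qa by (simp add: Q_def)
      then have "(r+5)*l div l \<le> a div l" by (rule div_le_mono)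
      then have "r + 5 \<le> a div l" using l by simp
      then have lt: "R - a div l < R - r" using True by simp
      have "stat f l coin D k' (a div l) (a mod l) \<noteq> Undecided"
        using less.hyps[OF lt True] l less.prems \<open>r + 5 \<le> a div l\<close> k' by simp
      moreover have "stat f l coin D k' (a div l) (a mod l) \<noteq> Skip" using Qa by (simp add: Q_def)
      ultimately show ?thesis by (rule status_cases3)
    next
      case False
      then have "R + 1 \<le> a div l" by simp
      then have "(R+1) * l \<le> a" using l
        using less_eq_div_iff_mult_less_eq[of l "R+1" a] by simp
      moreover have "(r+5) * l \<le> a" using Qa by (simp add: Q_def)
      ultimately have "\<rho>0 * l \<le> a" by (simp add: \<rho>0_def max_def)
      then have "a = \<rho>0 * l" using ale by simp
      then show ?thesis using c0 s0div by simp
    qed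
    then obtain A where A: "stat f l coin D k' (a div l) (a mod l) = Commit A" by blast
    have "stat f l coin D k r j = (if \<exists>c L. c \<in> hist A \<and> in_slot coin r j L \<and> cert f c L
                then Commit (SOME L. in_slot coin r j L \<and> (\<exists>c. c \<in> hist A \<and> cert f c L))
                else Skip)"
    proof -
      have nd: "Ex (direct_commit f coin D r j) = False" "direct_skip f coin D r j = False"
        using False by auto
      show ?thesis using A unfolding k' stat.simps a_def Q_def Let_def by (simp only: kr nd if_False if_True not_True_eq_False not_False_eq_True status.case)
    qed
    then show ?thesis by simp
  qed
qed


lemma delivered_hist:
  assumes l: "1 \<le> l" and fin: "finite D"
    and kn: "\<forall>\<rho>\<le>R+5. known f D \<rho>"
    and dc: "\<forall>i\<in>{1..5}. \<exists>L. direct_commit f coin D (R+i) 0 L"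
    and Mx: "R + 1 \<le> Max (insert 0 (rnd ` D))"
  shows "\<exists>L. direct_commit f coin D (R+1) 0 L \<and> hist L \<subseteq> delivered f l coin D"
proof -
  define M where "M = Max (insert 0 (rnd ` D))"
  define L0 where "L0 = (SOME L. direct_commit f coin D (R+1) 0 L)"
  have ex1: "\<exists>L. direct_commit f coin D (R+1) 0 L" using dc[rule_format, of 1] by simp
  have L0: "direct_commit f coin D (R+1) 0 L0" unfolding L0_def using ex1 by (rule someI_ex)
  have st: "\<And>s. status f l coin D (s div l) (s mod l) = stat f l coin D (Suc M) (s div l) (s mod l)"
    by (simp add: status_def M_def)
  have dec: "status f l coin D (s div l) (s mod l) \<noteq> Undecided" if "s < (R+1) * l" for s
  proof -
    have "s div l < R + 1" using that l by (simp add: less_mult_imp_div_less)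
    moreover have "s mod l < l" using l by simp
    ultimately show ?thesis unfolding st
      by (intro stat_decided[OF l kn dc]) (use Mx in \<open>auto simp: M_def\<close>)
  qed
  have sR: "status f l coin D (((R+1)*l) div l) (((R+1)*l) mod l) = Commit L0"
  proof -
    have "((R+1)*l) div l = R+1" "((R+1)*l) mod l = 0" using l by auto
    moreover have "known f D (R+1)" using kn by simp
    ultimately show ?thesis unfolding st L0_def using ex1 by simp
  qed
  have und: "status f l coin D (((M+1)*l) div l) (((M+1)*l) mod l) = Undecided"
  proof -
    have e: "((M+1)*l) div l = M+1" "((M+1)*l) mod l = 0" using l by auto
    have "\<forall>b\<in>D. rnd b \<le> M" unfolding M_def using fin by (simp add: Max_ge)
    then have "authors_at D (M+1+4) = {}" by (force simp: authors_at_def)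
    then have "\<not> known f D (M+1)" by (simp add: known_def quorum_def)
    then show ?thesis using st[of "(M+1)*l"] e by simp
  qed
  define P where "P = (\<lambda>s. l \<le> s \<and> status f l coin D (s div l) (s mod l) = Undecided)"
  define u where "u = (LEAST s. P s)"
  have Pex: "P ((M+1)*l)" using und l by (simp add: P_def)
  have Pu: "P u" unfolding u_def using Pex by (rule LeastI)
  have "(R+1) * l < u"
  proof (rule ccontr)
    assume "\<not> (R+1) * l < u"
    then have "u < (R+1)*l \<or> u = (R+1)*l" by auto
    then show False using dec[of u] sR Pu by (auto simp: P_def)
  qed
  moreover have "l \<le> (R+1) * l" by simp
  ultimately have "hist L0 \<subseteq> delivered f l coin D"
    unfolding delivered_def Let_def u_def[symmetric] P_def[symmetric] using sR by blast
  then show ?thesis using L0 by blast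
qed



context mm begin

lemma H_nonempty: "H \<noteq> {}"
  using card_H_ge by auto

lemma deliver_of_good:
  assumes l: "1 \<le> l"
    and good: "\<forall>k\<in>{1..5}. goodL (R+k) (coin (R+k) ! 0)"
    and late: "\<forall>a\<in>H. b \<in> hist (hblk E a (R+1))"
    and hi: "honest f Byz i"
  shows "\<exists>t. b \<in> delivered f l coin (dag E i t)"
proof -
  let ?A = "H \<times> {1..R+9}"
  have ev: "\<forall>x\<in>?A. \<exists>t. hblk E (fst x) (snd x) \<in> dag E i t"
  proof
    fix x assume x: "x \<in> ?A"
    then have hj: "honest f Byz (fst x)" "1 \<le> snd x" by (auto simp: honest_H)
    show "\<exists>t. hblk E (fst x) (snd x) \<in> dag E i t"
      using eventually_in[OF hi hj(1) all_rounds[OF hj]] .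
  qed
  have "\<exists>t. \<forall>x\<in>?A. hblk E (fst x) (snd x) \<in> dag E i t"
  proof (rule finite_eventually)
    show "finite ?A" by simp
    show "\<forall>x\<in>?A. \<exists>t. hblk E (fst x) (snd x) \<in> dag E i t" using ev .
    fix x t t' assume "hblk E (fst x) (snd x) \<in> dag E i t" "t \<le> t'"
    then show "hblk E (fst x) (snd x) \<in> dag E i t'" using dag_mono[OF hi] by blast
  qed
  then obtain t where t: "\<forall>x\<in>?A. hblk E (fst x) (snd x) \<in> dag E i t" by blast
  have tin: "hblk E j \<rho> \<in> dag E i t" if "j \<in> H" "1 \<le> \<rho>" "\<rho> \<le> R+9" for j \<rho>
    using t that by force
  let ?D = "dag E i t"
  have fin: "finite ?D" using dag_finite[OF hi] .
  have rndj: "rnd (hblk E j \<rho>) = \<rho>" "auth (hblk E j \<rho>) = j" if jH: "j \<in> H" and r1: "1 \<le> \<rho>" for j \<rho>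
  proof -
    have hj: "honest f Byz j" using jH by (simp add: honest_H)
    obtain \<tau> where "htime E j \<rho> = Some \<tau>" using htime_some[OF hj r1] by blast
    then show "rnd (hblk E j \<rho>) = \<rho>" "auth (hblk E j \<rho>) = j" using hblk_rnd[OF hj] hblk_auth[OF hj] by auto
  qed
  have kn: "\<forall>\<rho>\<le>R+5. known f ?D \<rho>"
  proof (intro allI impI)
    fix \<rho> assume "\<rho> \<le> R+5"
    have "quorum f ?D (\<rho>+4)"
    proof (rule quorum_of_H[OF fin])
      show "\<forall>j\<in>H. \<exists>b\<in>?D. auth b = j \<and> rnd b = \<rho> + 4"
      proof
        fix j assume jH: "j \<in> H"
        have "1 \<le> \<rho> + 4" "\<rho> + 4 \<le> R + 9" using \<open>\<rho> \<le> R+5\<close> by auto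
        then show "\<exists>b\<in>?D. auth b = j \<and> rnd b = \<rho> + 4" using tin[OF jH] rndj[OF jH] by blast
      qed
    qed
    then show "known f ?D \<rho>" by (simp add: known_def)
  qed
  have dc: "\<forall>k\<in>{1..5}. \<exists>L. direct_commit f coin ?D (R+k) 0 L"
  proof
    fix k :: nat assume k: "k \<in> {1..5}"
    let ?a = "coin (R+k) ! 0"
    have g: "goodL (R+k) ?a" using good k by blast
    then have aH: "?a \<in> H" by (simp add: goodL_def honest_H)
    have "direct_commit f coin ?D (R+k) 0 (hblk E ?a (R+k))"
    proof (rule good_direct_commit[OF g _ hi])
      show "coin (R+k) ! 0 = ?a" by simp
      show "hblk E ?a (R+k) \<in> ?D" using tin[OF aH] k by simp
      show "\<forall>j\<in>H. hblk E j (R + k + 4) \<in> ?D" using tin k by simp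
    qed
    then show "\<exists>L. direct_commit f coin ?D (R+k) 0 L" by blast
  qed
  have Mx: "R + 1 \<le> Max (insert 0 (rnd ` ?D))"
  proof -
    obtain j where j: "j \<in> H" using H_nonempty by blast
    have "hblk E j (R+9) \<in> ?D" using tin[OF j] by simp
    then have "rnd (hblk E j (R+9)) \<le> Max (insert 0 (rnd ` ?D))" using fin by (intro Max_ge) auto
    then show ?thesis using rndj[OF j, of "R+9"] by simp
  qed
  obtain L where L: "direct_commit f coin ?D (R+1) 0 L" "hist L \<subseteq> delivered f l coin ?D"
    using delivered_hist[OF l fin kn dc Mx] by blast
  let ?a = "coin (R+1) ! 0"
  have "goodL (R+1) ?a" using good[rule_format, of 1] by simp
  then have ha: "honest f Byz ?a" by (simp add: goodL_def)
  have "L \<in> ?D" "auth L = ?a" "rnd L = R+1" using L(1) by (auto simp: direct_commit_def in_slot_def)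
  then have "L = hblk E ?a (R+1)" using uniq2[OF hi _ ha] by blast
  then have "b \<in> hist L" using late ha by (simp add: honest_H)
  then show ?thesis using L(2) by blast
qed

end


lemma card_filter_sum: "finite Y \<Longrightarrow> card {y\<in>Y. P y} = (\<Sum>y\<in>Y. if P y then 1 else 0)"
proof -
  assume fY: "finite Y"
  have "card {y\<in>Y. P y} = sum (\<lambda>x. 1) {y\<in>Y. P y}" by (rule card_eq_sum)
  also have "\<dots> = (\<Sum>y\<in>Y. if P y then 1 else 0)" using fY by (rule sum.inter_filter)
  finally show ?thesis .
qed

lemma double_count:
  assumes "finite A" "finite B"
  shows "(\<Sum>a\<in>A. card {b\<in>B. P a b}) = (\<Sum>b\<in>B. card {a\<in>A. P a b})"
proof -
  have "(\<Sum>a\<in>A. card {b\<in>B. P a b}) = (\<Sum>a\<in>A. \<Sum>b\<in>B. if P a b then 1 else 0)"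
    using assms by (simp add: card_filter_sum)
  also have "\<dots> = (\<Sum>b\<in>B. \<Sum>a\<in>A. if P a b then 1 else 0)" by (rule sum.swap)
  also have "\<dots> = (\<Sum>b\<in>B. card {a\<in>A. P a b})"
    using assms by (simp add: card_filter_sum)
  finally show ?thesis .
qed

context mm begin

definition rev_set :: "nat \<Rightarrow> nat \<Rightarrow> nat set" where
  "rev_set t r = {i. honest f Byz i \<and> (\<exists>\<tau>\<le>t. htime E i (r+4) = Some \<tau>)}"

lemma revealed_eq: "revealed f Byz E t r \<longleftrightarrow> f + 1 \<le> card (rev_set t r)"
  by (simp add: revealed_def rev_set_def)

lemma rev_set_sub: "rev_set t r \<subseteq> {..<3*f+1}"
  by (auto simp: rev_set_def honest_def)

lemma rev_set_finite: "finite (rev_set t r)"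
  using rev_set_sub by (rule finite_subset) simp

lemma rev_exists: "\<exists>t. revealed f Byz E t r"
proof -
  have "\<exists>t. \<forall>j\<in>H. \<exists>\<tau>\<le>t. htime E j (r+4) = Some \<tau>"
  proof (rule finite_eventually)
    show "finite H" by simp
    show "\<forall>j\<in>H. \<exists>t \<tau>. \<tau> \<le> t \<and> htime E j (r+4) = Some \<tau>"
    proof
      fix j assume "j \<in> H"
      then have "honest f Byz j" by (simp add: honest_H)
      then obtain \<tau> where "htime E j (r+4) = Some \<tau>" using htime_some[of j "r+4"] by auto
      then show "\<exists>t \<tau>. \<tau> \<le> t \<and> htime E j (r+4) = Some \<tau>" by blast
    qed
    fix x t t' assume "\<exists>\<tau>\<le>t. htime E x (r+4) = Some \<tau>" "t \<le> t'"
    then show "\<exists>\<tau>\<le>t'. htime E x (r+4) = Some \<tau>" using le_trans by blast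
  qed
  then obtain t where t: "\<forall>j\<in>H. \<exists>\<tau>\<le>t. htime E j (r+4) = Some \<tau>" by blast
  have "H \<subseteq> rev_set t r" using t by (auto simp: rev_set_def honest_H)
  then have "card H \<le> card (rev_set t r)" using rev_set_finite by (intro card_mono) auto
  then have "f+1 \<le> card (rev_set t r)" using card_H_ge by simp
  then show ?thesis unfolding revealed_eq by blast
qed

definition T :: "nat \<Rightarrow> nat" where
  "T r = (LEAST t. revealed f Byz E t r)"

lemma T_rev: "revealed f Byz E (T r) r"
  unfolding T_def using rev_exists by (rule LeastI_ex)

lemma T_min: "t < T r \<Longrightarrow> \<not> revealed f Byz E t r"
  unfolding T_def by (rule not_less_Least)

lemma rev_set_0: "rev_set 0 r = {}"
proof -
  have "\<not> (honest f Byz i \<and> htime E i (r+4) = Some 0)" for i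
  proof
    assume a: "honest f Byz i \<and> htime E i (r+4) = Some 0"
    then obtain t where "(0::nat) = Suc t" using htime_Suc[of i "r+4" 0] by blast
    then show False by simp
  qed
  then show ?thesis by (auto simp: rev_set_def)
qed

lemma T_pos: "1 \<le> T r"
proof (rule ccontr)
  assume "\<not> 1 \<le> T r"
  then have "T r = 0" by simp
  then show False using T_rev[of r] by (simp add: revealed_eq rev_set_0)
qed

lemma rev_mono_round: "revealed f Byz E t r' \<Longrightarrow> r \<le> r' \<Longrightarrow> revealed f Byz E t r"
proof -
  assume a: "revealed f Byz E t r'" "r \<le> r'"
  have "rev_set t r' \<subseteq> rev_set t r"
  proof
    fix i assume "i \<in> rev_set t r'"
    then obtain \<tau> where i: "honest f Byz i" "\<tau> \<le> t" "htime E i (r'+4) = Some \<tau>" by (auto simp: rev_set_def)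
    from htime_down[OF i(1) i(3), of "r+4"] a(2) obtain \<tau>' where "htime E i (r+4) = Some \<tau>'" "\<tau>' \<le> \<tau>" by auto
    then show "i \<in> rev_set t r" using i by (auto simp: rev_set_def)
  qed
  then have "card (rev_set t r') \<le> card (rev_set t r)"
    using rev_set_finite by (intro card_mono) auto
  then show ?thesis using a(1) by (simp add: revealed_eq)
qed

definition Cset :: "nat \<Rightarrow> nat set" where
  "Cset r = {a. honest f Byz a \<and> (\<exists>\<tau>\<le>T r. htime E a r = Some \<tau>) \<and>
      (\<forall>x \<tau>. honest f Byz x \<longrightarrow> \<tau> \<le> T r \<longrightarrow> htime E x (r+2) = Some \<tau> \<longrightarrow> hblk E a r \<in> hist (hblk E x (r+2)))}"

lemma C_good: "1 \<le> r \<Longrightarrow> a \<in> Cset r \<Longrightarrow> goodL r a"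
proof -
  assume r: "1 \<le> r" and a: "a \<in> Cset r"
  let ?X = "{x. honest f Byz x \<and> htime E x (r+2) \<noteq> None \<and> hblk E a r \<in> hist (hblk E x (r+2))}"
  have "rev_set (T r) r \<subseteq> ?X"
  proof
    fix x assume "x \<in> rev_set (T r) r"
    then obtain \<tau> where x: "honest f Byz x" "\<tau> \<le> T r" "htime E x (r+4) = Some \<tau>" by (auto simp: rev_set_def)
    from htime_down[OF x(1) x(3), of "r+2"] obtain \<tau>' where "htime E x (r+2) = Some \<tau>'" "\<tau>' \<le> \<tau>" by auto
    then show "x \<in> ?X" using a x by (auto simp: Cset_def)
  qed
  moreover have "?X \<subseteq> {..<3*f+1}" by (auto simp: honest_def)
  ultimately have "card (rev_set (T r) r) \<le> card ?X" by (intro card_mono) (auto intro: finite_subset)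
  then show ?thesis using T_rev[of r] a r by (simp add: revealed_eq goodL_def Cset_def)
qed

lemma card_inter_H:
  assumes "A \<subseteq> {..<3*f+1}"
  shows "card A \<le> card (A \<inter> H) + card Byz"
proof -
  have "A \<subseteq> (A \<inter> H) \<union> Byz" using assms by (auto simp: H_eq)
  then have "card A \<le> card ((A \<inter> H) \<union> Byz)" using byz_sub by (intro card_mono) (auto intro: finite_subset)
  also have "\<dots> \<le> card (A \<inter> H) + card Byz" by (rule card_Un_le)
  finally show ?thesis .
qed

lemma C_nonempty:
  assumes r: "1 \<le> r"
  shows "Cset r \<noteq> {}"
proof -
  let ?T = "T r"
  define h where "h = card H"
  define d where "d = h - f"
  have hd: "h = d + f" "f + 1 \<le> d" using card_H_ge by (auto simp: h_def d_def)
  define Y where "Y = {y\<in>H. \<exists>\<tau>\<le>?T. htime E y (r+1) = Some \<tau>}"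
  define S where "S = (\<lambda>y. {a\<in>H. hblk E a r \<in> hist (hblk E y (r+1))})"
  have finY: "finite Y" by (simp add: Y_def)
  have YH: "Y \<subseteq> H" by (auto simp: Y_def)
  have hfacts: "rnd (hblk E j \<rho>) = \<rho> \<and> auth (hblk E j \<rho>) = j \<and> (\<exists>\<tau>. htime E j \<rho> = Some \<tau>)"
    if jH: "j \<in> H" and r1: "1 \<le> \<rho>" for j \<rho>
  proof -
    have hj: "honest f Byz j" using jH by (simp add: honest_H)
    obtain \<tau> where "htime E j \<rho> = Some \<tau>" using htime_some[OF hj r1] by blast
    then show ?thesis using hblk_rnd[OF hj] hblk_auth[OF hj] by auto
  qed
  have S_card: "d \<le> card (S y)" if yY: "y \<in> Y" for y
  proof -
    have hy: "honest f Byz y" using yY by (simp add: Y_def honest_H)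
    obtain \<tau> where ty: "htime E y (r+1) = Some \<tau>" using yY by (auto simp: Y_def)
    let ?B = "hblk E y (r+1)"
    have Bin: "?B \<in> dag E y \<tau>" using hblk_in[OF hy ty] .
    have v: "valid f ?B" using dag_valid[OF hy Bin] .
    have rB: "rnd ?B = r + 1" using hblk_rnd[OF hy ty] .
    let ?A = "authors_at (set (pars ?B)) r"
    have qA: "2*f+1 \<le> card ?A" using quorum_pars[OF v] rB r by simp
    have "card ?A \<le> card (?A \<inter> H) + card Byz" using card_inter_H authors_at_sub[OF v] by blast
    then have c1: "d \<le> card (?A \<inter> H)" using qA byz_card card_H unfolding d_def h_def by arith
    have "?A \<inter> H \<subseteq> S y"
    proof
      fix a assume a: "a \<in> ?A \<inter> H"
      then obtain p where p: "p \<in> set (pars ?B)" "auth p = a" "rnd p = r" by (auto simp: authors_at_def)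
      have ha: "honest f Byz a" using a by (simp add: honest_H)
      have "p \<in> dag E y \<tau>" using dag_pars[OF hy Bin] p(1) by blast
      then have "p = hblk E a r" using uniq2[OF hy _ ha p(2,3)] by blast
      then have "hblk E a r \<in> hist ?B" using p(1) hist_par hist_self by blast
      then show "a \<in> S y" using a by (simp add: S_def)
    qed
    then have "card (?A \<inter> H) \<le> card (S y)" by (intro card_mono) (auto simp: S_def)
    then show ?thesis using c1 by simp
  qed
  have S_time: "\<exists>\<tau>\<le>?T. htime E a r = Some \<tau>" if yY: "y \<in> Y" and aS: "a \<in> S y" for y a
  proof -
    have hy: "honest f Byz y" using yY by (simp add: Y_def honest_H)
    obtain \<tau> where ty: "htime E y (r+1) = Some \<tau>" "\<tau> \<le> ?T" using yY by (auto simp: Y_def)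
    have aH: "a \<in> H" and ah: "hblk E a r \<in> hist (hblk E y (r+1))" using aS by (auto simp: S_def)
    have ha: "honest f Byz a" using aH by (simp add: honest_H)
    have "hblk E a r \<in> dag E y \<tau>" using dag_hist[OF hy hblk_in[OF hy ty(1)]] ah by blast
    then obtain \<tau>' where "htime E a r = Some \<tau>'" "\<tau>' \<le> \<tau>" using uniq2[OF hy _ ha] hfacts[OF aH r] by blast
    then show ?thesis using ty(2) by auto
  qed
  define Tx where "Tx = (\<lambda>x. {y\<in>H. hblk E y (r+1) \<in> set (pars (hblk E x (r+2)))})"
  have Tx_props: "Tx x \<subseteq> Y \<and> d \<le> card (Tx x)"
    if hx: "honest f Byz x" and tx: "htime E x (r+2) = Some \<tau>" and tT: "\<tau> \<le> ?T" for x \<tau>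
  proof
    let ?B = "hblk E x (r+2)"
    have Bin: "?B \<in> dag E x \<tau>" using hblk_in[OF hx tx] .
    have v: "valid f ?B" using dag_valid[OF hx Bin] .
    have rB: "rnd ?B = r + 2" using hblk_rnd[OF hx tx] .
    show "Tx x \<subseteq> Y"
    proof
      fix y assume "y \<in> Tx x"
      then have yH: "y \<in> H" and yp: "hblk E y (r+1) \<in> set (pars ?B)" by (auto simp: Tx_def)
      have hy: "honest f Byz y" using yH by (simp add: honest_H)
      have yin: "hblk E y (r+1) \<in> dag E x \<tau>" using dag_pars[OF hx Bin] yp by blast
      have hf: "auth (hblk E y (r+1)) = y" "rnd (hblk E y (r+1)) = r+1" using hfacts[OF yH, of "r+1"] by auto
      obtain \<tau>' where "htime E y (r+1) = Some \<tau>'" "\<tau>' \<le> \<tau>"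
        using uniq2[OF hx yin hy hf] by blast
      then show "y \<in> Y" using yH tT by (auto simp: Y_def)
    qed
    let ?A = "authors_at (set (pars ?B)) (r+1)"
    have qA: "2*f+1 \<le> card ?A" using quorum_pars[OF v] rB by simp
    have "card ?A \<le> card (?A \<inter> H) + card Byz" using card_inter_H authors_at_sub[OF v] by blast
    then have c1: "d \<le> card (?A \<inter> H)" using qA byz_card card_H unfolding d_def h_def by arith
    have "?A \<inter> H \<subseteq> Tx x"
    proof
      fix y assume a: "y \<in> ?A \<inter> H"
      then obtain p where p: "p \<in> set (pars ?B)" "auth p = y" "rnd p = r+1" by (auto simp: authors_at_def)
      have hy: "honest f Byz y" using a by (simp add: honest_H)
      have "p \<in> dag E x \<tau>" using dag_pars[OF hx Bin] p(1) by blast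
      then have "p = hblk E y (r+1)" using uniq2[OF hx _ hy p(2,3)] by blast
      then show "y \<in> Tx x" using a p(1) by (simp add: Tx_def)
    qed
    then have "card (?A \<inter> H) \<le> card (Tx x)" by (intro card_mono) (auto simp: Tx_def)
    then show "d \<le> card (Tx x)" using c1 by simp
  qed
  have Tx_hist: "hist (hblk E y (r+1)) \<subseteq> hist (hblk E x (r+2))" if "y \<in> Tx x" for x y
    using that hist_par by (auto simp: Tx_def)
  obtain x0 \<tau>0 where x0: "honest f Byz x0" "htime E x0 (r+2) = Some \<tau>0" "\<tau>0 \<le> ?T"
  proof -
    have "f + 1 \<le> card (rev_set ?T r)" using T_rev[of r] by (simp add: revealed_eq)
    then have "rev_set ?T r \<noteq> {}" by auto
    then obtain x \<tau> where x: "honest f Byz x" "\<tau> \<le> ?T" "htime E x (r+4) = Some \<tau>" by (auto simp: rev_set_def)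
    from htime_down[OF x(1) x(3), of "r+2"] obtain \<tau>' where "htime E x (r+2) = Some \<tau>'" "\<tau>' \<le> \<tau>" by auto
    then show ?thesis using that x by auto
  qed
  have dY: "d \<le> card Y"
  proof -
    have "Tx x0 \<subseteq> Y" "d \<le> card (Tx x0)" using Tx_props[OF x0] by auto
    then show ?thesis using card_mono[OF finY, of "Tx x0"] by linarith
  qed
  have Yh: "card Y \<le> h" unfolding h_def using YH by (intro card_mono) auto
  define c where "c = (\<lambda>a. card {y\<in>Y. a \<in> S y})"
  have "\<exists>a\<in>H. card Y < c a + d"
  proof (rule ccontr)
    assume "\<not> (\<exists>a\<in>H. card Y < c a + d)"
    then have le: "\<forall>a\<in>H. c a + d \<le> card Y" by auto
    have "(\<Sum>a\<in>H. c a + d) \<le> (\<Sum>a\<in>H. card Y)" using le by (intro sum_mono) auto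
    then have s1: "(\<Sum>a\<in>H. c a) + h * d \<le> h * card Y" by (simp add: sum.distrib h_def)
    have "(\<Sum>a\<in>H. c a) = (\<Sum>y\<in>Y. card {a\<in>H. a \<in> S y})"
      unfolding c_def by (rule double_count) (simp_all add: finY)
    also have "\<dots> = (\<Sum>y\<in>Y. card (S y))" by (intro sum.cong) (auto simp: S_def)
    also have "\<dots> \<ge> (\<Sum>y\<in>Y. d)" using S_card by (intro sum_mono) auto
    finally have s2: "card Y * d \<le> (\<Sum>a\<in>H. c a)" by simp
    from s1 s2 have "card Y * d + h * d \<le> h * card Y" by simp
    then have "card Y * d + (d + f) * d \<le> (d + f) * card Y" using hd by simp
    then have "(d + f) * d \<le> f * card Y" by (simp add: distrib_right)
    also have "\<dots> \<le> f * (d + f)" using Yh hd by simp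
    finally have "(d + f) * d \<le> (d + f) * f" by (simp add: mult.commute)
    then have "d \<le> f" using hd by simp
    then show False using hd by simp
  qed
  then obtain a where aH: "a \<in> H" and ca: "card Y < c a + d" by blast
  have ha: "honest f Byz a" using aH by (simp add: honest_H)
  have inter: "Tx x \<inter> {y\<in>Y. a \<in> S y} \<noteq> {}"
    if hx: "honest f Byz x" and tx: "htime E x (r+2) = Some \<tau>" and tT: "\<tau> \<le> ?T" for x \<tau>
  proof
    assume e: "Tx x \<inter> {y\<in>Y. a \<in> S y} = {}"
    have "Tx x \<union> {y\<in>Y. a \<in> S y} \<subseteq> Y" using Tx_props[OF hx tx tT] by auto
    then have "card (Tx x \<union> {y\<in>Y. a \<in> S y}) \<le> card Y" using finY by (intro card_mono) auto
    moreover have "card (Tx x \<union> {y\<in>Y. a \<in> S y}) = card (Tx x) + c a"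
    proof -
      have "finite (Tx x)" using Tx_props[OF hx tx tT] finY finite_subset by blast
      moreover have "finite {y\<in>Y. a \<in> S y}" using finY by simp
      ultimately show ?thesis unfolding c_def using e by (rule card_Un_disjoint)
    qed
    ultimately show False using ca Tx_props[OF hx tx tT] by simp
  qed
  have "a \<in> Cset r"
  proof -
    have "Tx x0 \<inter> {y\<in>Y. a \<in> S y} \<noteq> {}" using inter[OF x0] .
    then obtain y where "y \<in> Y" "a \<in> S y" by blast
    then have t: "\<exists>\<tau>\<le>?T. htime E a r = Some \<tau>" using S_time by blast
    have "\<forall>x \<tau>. honest f Byz x \<longrightarrow> \<tau> \<le> ?T \<longrightarrow> htime E x (r+2) = Some \<tau> \<longrightarrow> hblk E a r \<in> hist (hblk E x (r+2))"
    proof (intro allI impI)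
      fix x \<tau> assume x: "honest f Byz x" "\<tau> \<le> ?T" "htime E x (r+2) = Some \<tau>"
      from inter[OF x(1) x(3) x(2)] obtain y where y: "y \<in> Tx x" "a \<in> S y" by blast
      then have "hblk E a r \<in> hist (hblk E y (r+1))" by (simp add: S_def)
      then show "hblk E a r \<in> hist (hblk E x (r+2))" using Tx_hist[OF y(1)] by blast
    qed
    then show ?thesis using ha t by (simp add: Cset_def)
  qed
  then show ?thesis by blast
qed

end


lemma Cset_indep:
  assumes adm: "\<forall>\<omega>. admissible f Byz (Adv \<omega>)" and na: "non_anticipating f Byz Adv"
    and bs: "Byz \<subseteq> {..<3*f+1}" and bc: "card Byz \<le> f"
    and eq: "\<forall>r'<r. \<omega> r' = \<omega>' r'"
  shows "mm.Cset f Byz (Adv \<omega>) r = mm.Cset f Byz (Adv \<omega>') r"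
proof -
  let ?E = "Adv \<omega>" and ?E' = "Adv \<omega>'"
  interpret m1: mm f Byz ?E using adm bs bc by (simp add: mm_def)
  interpret m2: mm f Byz ?E' using adm bs bc by (simp add: mm_def)
  let ?T = "m1.T r"
  have ag: "agree_upto f Byz ?E ?E' (Suc t)" if tT: "t < ?T" for t
  proof -
    have "\<forall>r'. revealed f Byz ?E t r' \<longrightarrow> \<omega> r' = \<omega>' r'"
    proof (intro allI impI)
      fix r' assume rv: "revealed f Byz ?E t r'"
      have "r' < r"
      proof (rule ccontr)
        assume "\<not> r' < r"
        then have "revealed f Byz ?E t r" using m1.rev_mono_round[OF rv] by simp
        then show False using m1.T_min[OF tT] by simp
      qed
      then show "\<omega> r' = \<omega>' r'" using eq by simp
    qed
    then show ?thesis using na unfolding non_anticipating_def by blast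
  qed
  have agT: "agree_upto f Byz ?E ?E' ?T"
  proof -
    have "?T - 1 < ?T" "Suc (?T - 1) = ?T" using m1.T_pos[of r] by auto
    then show ?thesis using ag[of "?T - 1"] by simp
  qed
  have ht: "\<And>i r0 \<tau>. honest f Byz i \<Longrightarrow> \<tau> \<le> ?T \<Longrightarrow> (htime ?E i r0 = Some \<tau>) = (htime ?E' i r0 = Some \<tau>)"
    using agT unfolding agree_upto_def by blast
  have hb: "\<And>i r0 \<tau>. honest f Byz i \<Longrightarrow> \<tau> \<le> ?T \<Longrightarrow> htime ?E i r0 = Some \<tau> \<Longrightarrow> hblk ?E i r0 = hblk ?E' i r0"
    using agT unfolding agree_upto_def by blast
  have rs: "m1.rev_set t r = m2.rev_set t r" if "t \<le> ?T" for t
  proof -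
    have "\<And>i \<tau>. honest f Byz i \<Longrightarrow> \<tau> \<le> t \<Longrightarrow> (htime ?E i (r+4) = Some \<tau>) = (htime ?E' i (r+4) = Some \<tau>)"
      using ht that by simp
    then show ?thesis unfolding m1.rev_set_def m2.rev_set_def by blast
  qed
  have T2: "m2.T r = ?T"
  proof -
    have "revealed f Byz ?E' ?T r" using m1.T_rev[of r] rs[of ?T] by (simp add: m1.revealed_eq m2.revealed_eq)
    moreover have "\<And>t. t < ?T \<Longrightarrow> \<not> revealed f Byz ?E' t r"
    proof -
      fix t assume t: "t < ?T"
      then have "m1.rev_set t r = m2.rev_set t r" using rs by simp
      then show "\<not> revealed f Byz ?E' t r" using m1.T_min[OF t] by (simp add: m1.revealed_eq m2.revealed_eq)
    qed
    ultimately show ?thesis unfolding m2.T_def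
      by (intro Least_equality) (auto simp: not_less[symmetric])
  qed
  show ?thesis
  proof (intro set_eqI)
    fix a
    show "a \<in> m1.Cset r \<longleftrightarrow> a \<in> m2.Cset r"
    proof (cases "honest f Byz a \<and> (\<exists>\<tau>\<le>?T. htime ?E a r = Some \<tau>)")
      case True
      then obtain \<tau>a where ta: "honest f Byz a" "\<tau>a \<le> ?T" "htime ?E a r = Some \<tau>a" by blast
      have ta': "htime ?E' a r = Some \<tau>a" using ht[OF ta(1,2)] ta(3) by simp
      have ba: "hblk ?E a r = hblk ?E' a r" using hb[OF ta] .
      have "(\<forall>x \<tau>. honest f Byz x \<longrightarrow> \<tau> \<le> ?T \<longrightarrow> htime ?E x (r+2) = Some \<tau> \<longrightarrow> hblk ?E a r \<in> hist (hblk ?E x (r+2)))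
        \<longleftrightarrow> (\<forall>x \<tau>. honest f Byz x \<longrightarrow> \<tau> \<le> ?T \<longrightarrow> htime ?E' x (r+2) = Some \<tau> \<longrightarrow> hblk ?E' a r \<in> hist (hblk ?E' x (r+2)))"
        using ht hb ba by metis
      then show ?thesis using True ta ta' unfolding m1.Cset_def m2.Cset_def T2 by auto
    next
      case False
      then have "\<not> (honest f Byz a \<and> (\<exists>\<tau>\<le>?T. htime ?E' a r = Some \<tau>))" using ht by blast
      then show ?thesis using False unfolding m1.Cset_def m2.Cset_def T2 by blast
    qed
  qed
qed



definition G5 :: "(nat \<Rightarrow> nat list list \<Rightarrow> nat set) \<Rightarrow> nat list list \<Rightarrow> nat \<Rightarrow> bool" where
  "G5 c xs \<rho> \<longleftrightarrow> (\<forall>j\<in>{1..5}. xs ! (\<rho>+j) ! 0 \<in> c (\<rho>+j) (take (\<rho>+j) xs))"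

definition SS :: "nat list set \<Rightarrow> (nat \<Rightarrow> nat list list \<Rightarrow> nat set) \<Rightarrow> nat \<Rightarrow> nat \<Rightarrow> nat list list set" where
  "SS A c R0 m = {xs. length xs = R0 + 1 + 5*m \<and> set xs \<subseteq> A \<and> (\<forall>k<m. \<not> G5 c xs (R0 + 5*k))}"

lemma ext_exists:
  assumes "\<And>zs. \<exists>y\<in>A. Q zs y"
  shows "\<exists>ys. length ys = k \<and> set ys \<subseteq> A \<and> (\<forall>j<k. Q (take j ys) (ys ! j))"
proof (induction k)
  case 0 then show ?case by simp
next
  case (Suc k)
  then obtain ys where ys: "length ys = k" "set ys \<subseteq> A" "\<forall>j<k. Q (take j ys) (ys ! j)" by blast
  obtain y where y: "y \<in> A" "Q ys y" using assms by blast
  have "\<forall>j<Suc k. Q (take j (ys @ [y])) ((ys @ [y]) ! j)"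
  proof (intro allI impI)
    fix j assume "j < Suc k"
    then consider "j < k" | "j = k" by linarith
    then show "Q (take j (ys @ [y])) ((ys @ [y]) ! j)"
    proof cases
      case 1 then show ?thesis using ys by (simp add: nth_append)
    next
      case 2 then show ?thesis using ys y by (simp add: nth_append)
    qed
  qed
  then show ?case using ys y by (intro exI[of _ "ys @ [y]"]) auto
qed

lemma G5_append_irrel:
  assumes "\<rho> + 5 < length xs"
  shows "G5 c (xs @ ys) \<rho> = G5 c xs \<rho>"
proof -
  show ?thesis unfolding G5_def
  proof (intro ball_cong refl)
    fix j :: nat assume j: "j \<in> {1..5}"
    then have lt: "\<rho> + j < length xs" using assms by simp
    then have e1: "(xs @ ys) ! (\<rho>+j) = xs ! (\<rho>+j)" by (simp add: nth_append)
    have e2: "take (\<rho>+j) (xs @ ys) = take (\<rho>+j) xs" using lt by simp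
    show "((xs @ ys) ! (\<rho>+j) ! 0 \<in> c (\<rho>+j) (take (\<rho>+j) (xs @ ys))) = (xs ! (\<rho>+j) ! 0 \<in> c (\<rho>+j) (take (\<rho>+j) xs))"
      by (simp only: e1 e2)
  qed
qed

lemma SS_Suc_sub:
  "SS A c R0 (Suc m) \<subseteq> (\<lambda>(xs, ys). xs @ ys) ` (SIGMA xs:SS A c R0 m. {ys. length ys = 5 \<and> set ys \<subseteq> A \<and> \<not> G5 c (xs @ ys) (R0 + 5*m)})"
proof
  fix zs assume z: "zs \<in> SS A c R0 (Suc m)"
  define N where "N = R0 + 1 + 5*m"
  let ?xs = "take N zs" and ?ys = "drop N zs"
  have lz: "length zs = N + 5" using z by (simp add: SS_def N_def)
  have zz: "zs = ?xs @ ?ys" by simp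
  have lx: "length ?xs = N" using lz by simp
  have xsS: "?xs \<in> SS A c R0 m"
  proof -
    have "set ?xs \<subseteq> A" using z set_take_subset by (fastforce simp: SS_def)
    moreover have "\<forall>k<m. \<not> G5 c ?xs (R0 + 5*k)"
    proof (intro allI impI)
      fix k assume k: "k < m"
      have "\<not> G5 c zs (R0 + 5*k)" using z k by (simp add: SS_def)
      moreover have "R0 + 5*k + 5 < length ?xs" using lx k by (simp add: N_def)
      ultimately show "\<not> G5 c ?xs (R0 + 5*k)" using G5_append_irrel[of "R0 + 5*k" ?xs c ?ys] zz by simp
    qed
    ultimately show ?thesis using lx by (simp add: SS_def N_def)
  qed
  moreover have "length ?ys = 5 \<and> set ?ys \<subseteq> A \<and> \<not> G5 c (?xs @ ?ys) (R0 + 5*m)"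
    using z lz set_drop_subset by (fastforce simp: SS_def)
  ultimately show "zs \<in> (\<lambda>(xs, ys). xs @ ys) ` (SIGMA xs:SS A c R0 m. {ys. length ys = 5 \<and> set ys \<subseteq> A \<and> \<not> G5 c (xs @ ys) (R0 + 5*m)})"
    using zz by (intro image_eqI[of _ _ "(?xs, ?ys)"]) auto
qed

lemma SS_finite: "finite A \<Longrightarrow> finite (SS A c R0 m)"
  by (rule finite_subset[of _ "{xs. set xs \<subseteq> A \<and> length xs = R0 + 1 + 5*m}"])
     (auto simp: SS_def intro: finite_lists_length_eq)

lemma SS_card:
  assumes fA: "finite A"
    and hd: "\<And>r zs. 1 \<le> r \<Longrightarrow> \<exists>y\<in>A. y ! 0 \<in> c r zs"
  shows "card (SS A c R0 m) \<le> card A ^ (R0 + 1) * (card A ^ 5 - 1) ^ m"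
proof (induction m)
  case 0
  have "SS A c R0 0 \<subseteq> {xs. set xs \<subseteq> A \<and> length xs = R0 + 1}" by (auto simp: SS_def)
  then have "card (SS A c R0 0) \<le> card {xs. set xs \<subseteq> A \<and> length xs = R0 + 1}"
    by (intro card_mono) (auto intro: finite_lists_length_eq fA)
  then show ?case using card_lists_length_eq[OF fA] by simp
next
  case (Suc m)
  define B where "B = (\<lambda>xs. {ys. length ys = 5 \<and> set ys \<subseteq> A \<and> \<not> G5 c (xs @ ys) (R0 + 5*m)})"
  have L5: "finite {ys. set ys \<subseteq> A \<and> length ys = 5}" "card {ys. set ys \<subseteq> A \<and> length ys = 5} = card A ^ 5"
    using finite_lists_length_eq[OF fA] card_lists_length_eq[OF fA] by auto
  have Bfin: "finite (B xs)" for xs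
    by (rule finite_subset[OF _ L5(1)]) (auto simp: B_def)
  have Bcard: "card (B xs) \<le> card A ^ 5 - 1" if xs: "xs \<in> SS A c R0 m" for xs
  proof -
    let ?\<rho> = "R0 + 5*m"
    have lx: "length xs = ?\<rho> + 1" using xs by (simp add: SS_def)
    obtain g where g: "length g = 5" "set g \<subseteq> A"
        "\<forall>j<5. g ! j ! 0 \<in> c (?\<rho> + 1 + length (take j g)) (xs @ take j g)"
      using ext_exists[of A "\<lambda>zs y. y ! 0 \<in> c (?\<rho> + 1 + length zs) (xs @ zs)" 5] hd by fastforce
    have "G5 c (xs @ g) ?\<rho>"
      unfolding G5_def
    proof
      fix j :: nat assume j: "j \<in> {1..5}"
      have e1: "(xs @ g) ! (?\<rho> + j) = g ! (j - 1)" using lx j by (simp add: nth_append)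
      have e2: "take (?\<rho> + j) (xs @ g) = xs @ take (j - 1) g" using lx j by simp
      have "g ! (j-1) ! 0 \<in> c (?\<rho> + 1 + length (take (j-1) g)) (xs @ take (j-1) g)" 
      proof -
        have "j - 1 < 5" using j by auto
        then show ?thesis using g(3) by blast
      qed
      moreover have "?\<rho> + 1 + length (take (j-1) g) = ?\<rho> + j" using g(1) j by (auto simp: min_def)
      ultimately show "(xs @ g) ! (?\<rho> + j) ! 0 \<in> c (?\<rho> + j) (take (?\<rho> + j) (xs @ g))" using e1 e2 by simp
    qed
    then have "B xs \<subseteq> {ys. set ys \<subseteq> A \<and> length ys = 5} - {g}" by (auto simp: B_def)
    then have "card (B xs) \<le> card ({ys. set ys \<subseteq> A \<and> length ys = 5} - {g})"
      using L5 by (intro card_mono) auto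
    also have "\<dots> = card A ^ 5 - 1" using L5 g by (simp add: card_Diff_singleton)
    finally show ?thesis .
  qed
  have "card (SS A c R0 (Suc m)) \<le> card ((\<lambda>(xs, ys). xs @ ys) ` (SIGMA xs:SS A c R0 m. B xs))"
  proof (rule card_mono)
    show "finite ((\<lambda>(xs, ys). xs @ ys) ` (SIGMA xs:SS A c R0 m. B xs))"
    proof -
      have "\<forall>xs\<in>SS A c R0 m. finite (B xs)" using Bfin by blast
      then show ?thesis using SS_finite[OF fA] by auto
    qed
    show "SS A c R0 (Suc m) \<subseteq> (\<lambda>(xs, ys). xs @ ys) ` (SIGMA xs:SS A c R0 m. B xs)"
      using SS_Suc_sub unfolding B_def .
  qed
  also have "\<dots> \<le> card (SIGMA xs:SS A c R0 m. B xs)" by (rule card_image_le) (use SS_finite[OF fA] Bfin in auto)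
  also have "\<dots> = (\<Sum>xs\<in>SS A c R0 m. card (B xs))"
    by (rule card_SigmaI) (use SS_finite[OF fA] Bfin in auto)
  also have "\<dots> \<le> (\<Sum>xs\<in>SS A c R0 m. card A ^ 5 - 1)" using Bcard by (intro sum_mono) auto
  also have "\<dots> = card (SS A c R0 m) * (card A ^ 5 - 1)" by simp
  also have "\<dots> \<le> card A ^ (R0 + 1) * (card A ^ 5 - 1) ^ m * (card A ^ 5 - 1)" using Suc.IH by simp
  finally show ?case by (simp add: ac_simps)
qed



locale cs =
  fixes LL :: "nat list set"
  assumes LLfin: "finite LL" and LLne: "LL \<noteq> {}"
begin

abbreviation "Pm \<equiv> measure_pmf (pmf_of_set LL)"
abbreviation "mu \<equiv> PiM (UNIV::nat set) (\<lambda>_. Pm)"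

interpretation pps: product_prob_space "\<lambda>_::nat. Pm" UNIV
  by unfold_locales

lemma space_mu: "space mu = UNIV"
  by (auto simp: space_PiM)

definition Box :: "nat list list \<Rightarrow> (nat \<Rightarrow> nat list) set" where
  "Box xs = {\<omega>. \<forall>i<length xs. \<omega> i = xs ! i}"

lemma Box_emb: "Box xs = prod_emb UNIV (\<lambda>_. Pm) {..<length xs} (PiE {..<length xs} (\<lambda>i. {xs ! i}))"
  by (auto simp: Box_def prod_emb_def space_PiM PiE_def Pi_def extensional_def)

lemma Box_sets: "Box xs \<in> sets mu"
  unfolding Box_emb by (rule sets_PiM_I) auto

lemma pmf_le: "pmf (pmf_of_set LL) a \<le> 1 / real (card LL)"
  using LLfin LLne by (simp add: indicator_def)

lemma Box_measure: "measure mu (Box xs) \<le> (1 / real (card LL)) ^ length xs"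
proof -
  have "measure mu (Box xs) = (\<Prod>i\<in>{..<length xs}. measure Pm {xs ! i})"
    unfolding Box_emb by (rule pps.measure_PiM_emb) auto
  also have "\<dots> = (\<Prod>i\<in>{..<length xs}. pmf (pmf_of_set LL) (xs ! i))"
    by (simp add: measure_pmf_single)
  also have "\<dots> \<le> (\<Prod>i\<in>{..<length xs}. 1 / real (card LL))"
    by (intro prod_mono) (simp add: pmf_le)
  also have "\<dots> = (1 / real (card LL)) ^ length xs" by simp
  finally show ?thesis .
qed

definition U :: "nat list list set \<Rightarrow> nat \<Rightarrow> (nat \<Rightarrow> nat list) set" where
  "U S N = {\<omega>. map \<omega> [0..<N] \<in> S}"

lemma U_eq: "\<forall>xs\<in>S. length xs = N \<Longrightarrow> U S N = (\<Union>xs\<in>S. Box xs)"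
proof (intro set_eqI iffI)
  fix \<omega> assume "\<omega> \<in> U S N" and l: "\<forall>xs\<in>S. length xs = N"
  then have "map \<omega> [0..<N] \<in> S" by (simp add: U_def)
  moreover have "\<omega> \<in> Box (map \<omega> [0..<N])" by (simp add: Box_def)
  ultimately show "\<omega> \<in> (\<Union>xs\<in>S. Box xs)" by blast
next
  fix \<omega> assume "\<omega> \<in> (\<Union>xs\<in>S. Box xs)" and l: "\<forall>xs\<in>S. length xs = N"
  then obtain xs where xs: "xs \<in> S" "\<omega> \<in> Box xs" by blast
  have "map \<omega> [0..<N] = xs" using xs l by (intro nth_equalityI) (auto simp: Box_def)
  then show "\<omega> \<in> U S N" using xs by (simp add: U_def)
qed

lemma U_sets: "finite S \<Longrightarrow> \<forall>xs\<in>S. length xs = N \<Longrightarrow> U S N \<in> sets mu"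
  using U_eq Box_sets by (simp add: sets.finite_UN)

lemma U_measure:
  assumes "finite S" "\<forall>xs\<in>S. length xs = N"
  shows "measure mu (U S N) \<le> real (card S) * (1 / real (card LL)) ^ N"
proof -
  have "measure mu (U S N) \<le> (\<Sum>xs\<in>S. measure mu (Box xs))"
    unfolding U_eq[OF assms(2)] using assms(1) Box_sets by (rule measure_UNION_le)
  also have "\<dots> \<le> (\<Sum>xs\<in>S. (1 / real (card LL)) ^ N)"
    using Box_measure assms(2) by (intro sum_mono) auto
  also have "\<dots> = real (card S) * (1 / real (card LL)) ^ N" by simp
  finally show ?thesis .
qed

lemma AE_LL: "AE \<omega> in mu. \<forall>i. \<omega> i \<in> LL"
proof -
  have "\<And>i. AE \<omega> in mu. \<omega> i \<in> LL"
  proof -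
    fix i :: nat
    have "AE x in Pm. x \<in> LL" using LLfin LLne by (simp add: AE_measure_pmf_iff)
    then show "AE \<omega> in mu. \<omega> i \<in> LL" by (rule pps.AE_component[rotated]) simp
  qed
  then show ?thesis by (simp add: AE_all_countable)
qed

end


lemma LL_finite: "finite (leader_lists f l)"
proof -
  have "leader_lists f l \<subseteq> {xs. set xs \<subseteq> {..<3*f+1} \<and> length xs = l}" by (auto simp: leader_lists_def)
  then show ?thesis by (rule finite_subset) (simp add: finite_lists_length_eq)
qed

lemma LL_head: assumes "1 \<le> l" "l \<le> 3*f+1" "a < 3*f+1"
  shows "\<exists>y\<in>leader_lists f l. y ! 0 = a"
proof -
  define zs where "zs = filter (\<lambda>x. x \<noteq> a) [0..<3*f+1]"
  have dz: "distinct zs" by (simp add: zs_def)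
  have sz: "set zs = {..<3*f+1} - {a}" by (auto simp: zs_def)
  have lz: "length zs = 3*f" using distinct_card[OF dz] sz assms(3) by simp
  define y where "y = a # take (l - 1) zs"
  have "length y = l" using lz assms by (simp add: y_def)
  moreover have "distinct y" using dz sz by (auto simp: y_def dest: in_set_takeD intro: distinct_take)
  moreover have "set y \<subseteq> {..<3*f+1}" using sz assms(3) by (auto simp: y_def dest: in_set_takeD)
  ultimately show ?thesis by (intro bexI[of _ y]) (auto simp: leader_lists_def y_def)
qed

lemma LL_nonempty: "1 \<le> l \<Longrightarrow> l \<le> 3*f+1 \<Longrightarrow> leader_lists f l \<noteq> {}"
  using LL_head[of l f 0] by auto

theorem theorem3:
  fixes f l :: nat and Byz :: "nat set" and Adv :: "(nat \<Rightarrow> nat list) \<Rightarrow> 'm exec"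
  assumes "1 \<le> l" and "l \<le> 3 * f + 1"
    and "Byz \<subseteq> {..<3 * f + 1}" and "card Byz \<le> f"
    and "\<forall>\<omega>. admissible f Byz (Adv \<omega>)"
    and "non_anticipating f Byz Adv"
  shows "AE \<omega> in coin_space f l. \<forall>k r i.
           honest f Byz k \<and> honest f Byz i \<and> htime (Adv \<omega>) k r \<noteq> None \<longrightarrow>
           (\<exists>t. hblk (Adv \<omega>) k r \<in> delivered f l \<omega> (dag (Adv \<omega>) i t))"
proof -
  note l = assms(1,2) and bs = assms(3) and bc = assms(4) and adm = assms(5) and na = assms(6)
  let ?LL = "leader_lists f l"
  interpret cs ?LL using LL_finite LL_nonempty[OF l] by unfold_locales auto
  have pmu: "prob_space mu" by (rule prob_space_PiM) (simp add: prob_space_measure_pmf)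
  interpret pm: prob_space mu by (rule pmu)
  have mmA: "mm f Byz (Adv \<omega>)" for \<omega> using adm bs bc by (simp add: mm_def)
  define C where "C = (\<lambda>\<omega> r. mm.Cset f Byz (Adv \<omega>) r)"
  define ext where "ext = (\<lambda>ys::nat list list. \<lambda>i. if i < length ys then ys ! i else [])"
  define cf where "cf = (\<lambda>r ys. C (ext ys) r)"
  have Ceq: "C \<omega> r = cf r (map \<omega> [0..<r])" for \<omega> r
    unfolding C_def cf_def by (rule Cset_indep[OF adm na bs bc]) (simp add: ext_def)
  have hd: "\<exists>y\<in>?LL. y ! 0 \<in> cf r zs" if r: "1 \<le> r" for r zs
  proof -
    interpret m: mm f Byz "Adv (ext zs)" by (rule mmA)
    obtain a where a: "a \<in> m.Cset r" using m.C_nonempty[OF r] by blast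
    then have "a < 3*f+1" by (simp add: m.Cset_def honest_def)
    then obtain y where "y \<in> ?LL" "y ! 0 = a" using LL_head l by blast
    then show ?thesis using a by (auto simp: cf_def C_def)
  qed
  define c where "c = card ?LL"
  have c1: "1 \<le> c" using LL_finite LL_nonempty[OF l] by (simp add: c_def Suc_le_eq card_gt_0_iff)
  define \<theta> where "\<theta> = (real c ^ 5 - 1) / real c ^ 5"
  have \<theta>: "0 \<le> \<theta>" "\<theta> < 1"
  proof -
    have p: "1 \<le> real c ^ 5" using c1 by simp
    then show "0 \<le> \<theta>" by (auto simp: \<theta>_def)
    have "real c ^ 5 - 1 < real c ^ 5" by simp
    then show "\<theta> < 1" using p by (simp add: \<theta>_def divide_less_eq)
  qed
  define S where "S = (\<lambda>R0 m. SS ?LL cf R0 m)"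
  define N where "N = (\<lambda>R0 m::nat. R0 + 1 + 5 * m :: nat)"
  have Slen: "\<forall>xs\<in>S R0 m. length xs = N R0 m" for R0 m by (simp add: S_def SS_def N_def)
  have Sfin: "finite (S R0 m)" for R0 m unfolding S_def by (rule SS_finite[OF LL_finite])
  have Umeas: "measure mu (U (S R0 m) (N R0 m)) \<le> \<theta> ^ m" for R0 m
  proof -
    have cS: "card (S R0 m) \<le> c ^ (R0 + 1) * (c ^ 5 - 1) ^ m"
      unfolding S_def c_def by (rule SS_card[OF LL_finite hd])
    let ?x = "real c"
    have xp: "0 < ?x" using c1 by simp
    have r1: "real (c ^ 5 - 1) = ?x ^ 5 - 1" using c1 by (simp add: of_nat_diff)
    have "real (card (S R0 m)) \<le> ?x ^ (R0 + 1) * (?x ^ 5 - 1) ^ m"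
    proof -
      have "real (card (S R0 m)) \<le> real (c ^ (R0 + 1) * (c ^ 5 - 1) ^ m)" using cS by linarith
      also have "\<dots> = ?x ^ (R0 + 1) * (?x ^ 5 - 1) ^ m" using r1 by simp
      finally show ?thesis .
    qed
    moreover have "0 \<le> (1 / ?x) ^ N R0 m" using xp by simp
    ultimately have "real (card (S R0 m)) * (1 / ?x) ^ N R0 m \<le> ?x ^ (R0 + 1) * (?x ^ 5 - 1) ^ m * (1 / ?x) ^ N R0 m"
      by (rule mult_right_mono)
    also have "\<dots> = \<theta> ^ m"
    proof -
      have A: "(1 / ?x) ^ N R0 m = (1 / ?x) ^ (R0 + 1) * ((1 / ?x) ^ 5) ^ m"
        unfolding N_def by (simp only: power_add power_mult)
      have B: "?x ^ (R0 + 1) * (1 / ?x) ^ (R0 + 1) = 1" using xp by (simp add: power_one_over field_simps)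
      have Cc: "(?x ^ 5 - 1) ^ m * ((1 / ?x) ^ 5) ^ m = \<theta> ^ m"
        by (simp add: \<theta>_def power_mult_distrib[symmetric] power_one_over field_simps)
      have "?x ^ (R0 + 1) * (?x ^ 5 - 1) ^ m * (1 / ?x) ^ N R0 m
          = (?x ^ (R0 + 1) * (1 / ?x) ^ (R0 + 1)) * ((?x ^ 5 - 1) ^ m * ((1 / ?x) ^ 5) ^ m)"
        unfolding A by (simp only: ac_simps)
      then show ?thesis unfolding B Cc by simp
    qed
    finally have "real (card (S R0 m)) * (1 / ?x) ^ N R0 m \<le> \<theta> ^ m" .
    moreover have "measure mu (U (S R0 m) (N R0 m)) \<le> real (card (S R0 m)) * (1 / ?x) ^ N R0 m"
      using U_measure[OF Sfin Slen] by (simp add: c_def)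
    ultimately show ?thesis by linarith
  qed
  define Nset where "Nset = (\<lambda>R0. \<Inter>m. U (S R0 m) (N R0 m))"
  have Nnull: "Nset R0 \<in> null_sets mu" for R0
  proof -
    have sets: "Nset R0 \<in> sets mu" unfolding Nset_def using U_sets[OF Sfin Slen] by auto
    have "measure mu (Nset R0) \<le> \<theta> ^ m" for m
    proof -
      have "measure mu (Nset R0) \<le> measure mu (U (S R0 m) (N R0 m))"
        using sets U_sets[OF Sfin Slen] by (intro pm.finite_measure_mono) (auto simp: Nset_def)
      then show ?thesis using Umeas[of R0 m] by linarith
    qed
    moreover have "(\<lambda>m. \<theta> ^ m) \<longlonglongrightarrow> 0" using \<theta> by (intro LIMSEQ_power_zero) simp
    ultimately have "measure mu (Nset R0) \<le> 0"
      using LIMSEQ_le_const[of "\<lambda>m. \<theta> ^ m" 0 "measure mu (Nset R0)"] by blast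
    then have "measure mu (Nset R0) = 0" by (simp add: measure_le_0_iff)
    then show ?thesis using sets by (simp add: pm.emeasure_eq_measure null_sets_def)
  qed
  have Nall: "(\<Union>R0. Nset R0) \<in> null_sets mu" using Nnull by (intro null_sets_UN) auto
  define Good5 where "Good5 = (\<lambda>\<omega> R. \<forall>j\<in>{1..5}. \<omega> (R+j) ! 0 \<in> C \<omega> (R+j))"
  have io: "\<forall>R0. \<exists>R\<ge>R0. Good5 \<omega> R" if LLw: "\<forall>i. \<omega> i \<in> ?LL" and nN: "\<omega> \<notin> (\<Union>R0. Nset R0)" for \<omega>
  proof (rule ccontr)
    assume "\<not> (\<forall>R0. \<exists>R\<ge>R0. Good5 \<omega> R)"
    then obtain R0 where bad: "\<forall>R\<ge>R0. \<not> Good5 \<omega> R" by auto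
    have "\<omega> \<in> U (S R0 m) (N R0 m)" for m
    proof -
      let ?xs = "map \<omega> [0..<N R0 m]"
      have "\<not> G5 cf ?xs (R0 + 5*k)" if k: "k < m" for k
      proof -
        have "G5 cf ?xs (R0 + 5*k) = Good5 \<omega> (R0 + 5*k)"
          unfolding G5_def Good5_def
        proof (intro ball_cong refl)
          fix j :: nat assume j: "j \<in> {1..5}"
          have lt: "R0 + 5*k + j < N R0 m" using j k by (simp add: N_def)
          have e1: "?xs ! (R0 + 5*k + j) = \<omega> (R0 + 5*k + j)" using lt by simp
          have e2: "take (R0 + 5*k + j) ?xs = map \<omega> [0..<R0 + 5*k + j]" using lt by (simp add: take_map)
          show "(?xs ! (R0 + 5*k + j) ! 0 \<in> cf (R0 + 5*k + j) (take (R0 + 5*k + j) ?xs)) =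
                (\<omega> (R0 + 5*k + j) ! 0 \<in> C \<omega> (R0 + 5*k + j))"
            unfolding e1 e2 Ceq[of \<omega> "R0 + 5*k + j"] ..
        qed
        then show ?thesis using bad by simp
      qed
      moreover have "set ?xs \<subseteq> ?LL" using LLw by auto
      ultimately have "?xs \<in> S R0 m" by (simp add: S_def SS_def N_def)
      then show ?thesis by (simp add: U_def)
    qed
    then have "\<omega> \<in> Nset R0" by (simp add: Nset_def)
    then show False using nN by blast
  qed
  show ?thesis
    unfolding coin_space_def using AE_LL AE_not_in[OF Nall]
  proof eventually_elim
    case (elim \<omega>)
    have io\<omega>: "\<forall>R0. \<exists>R\<ge>R0. Good5 \<omega> R" using io elim by blast
    interpret m: mm f Byz "Adv \<omega>" by (rule mmA)
    show ?case
    proof (intro allI impI)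
      fix k r i assume a: "honest f Byz k \<and> honest f Byz i \<and> htime (Adv \<omega>) k r \<noteq> None"
      obtain Rb where Rb: "\<forall>a\<in>m.H. \<forall>\<rho>\<ge>Rb. hblk (Adv \<omega>) k r \<in> hist (hblk (Adv \<omega>) a \<rho>)"
        using m.late_hist a by blast
      obtain R where R: "R \<ge> Rb" "Good5 \<omega> R" using io\<omega> by blast
      have good: "\<forall>j\<in>{1..5}. m.goodL (R+j) (\<omega> (R+j) ! 0)"
      proof
        fix j :: nat assume "j \<in> {1..5}"
        then have "\<omega> (R+j) ! 0 \<in> m.Cset (R+j)" "1 \<le> R+j" using R(2) by (auto simp: Good5_def C_def)
        then show "m.goodL (R+j) (\<omega> (R+j) ! 0)" using m.C_good by blast
      qed
      have late: "\<forall>a\<in>m.H. hblk (Adv \<omega>) k r \<in> hist (hblk (Adv \<omega>) a (R+1))" using Rb R(1) by simp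
      show "\<exists>t. hblk (Adv \<omega>) k r \<in> delivered f l \<omega> (dag (Adv \<omega>) i t)"
        using m.deliver_of_good[OF l(1) good late] a by blast
    qed
  qed
qed


end
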